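(* Let $L$ be as in the context, and suppose $L=L_v+\mathbb{Z}v$ is an orthogonal direct sum with $v^2=2$. If $L_v$ is achiral then $L$ is achiral. More precisely, for any cell $P_v$ of $\Lambda(L_v)$, any automorphism $f_v$ of $L_v$ with $f_v(P_v)=P_v$ which is $P_v$-direct and $\mathbb{Z}/3$-reversing extends to an automorphism $f$ of $L$ which is $\mathbb{Z}/3$-reversing, preserves some cell $P$ of $\Lambda(L)$, and is $P$-direct.
   Context: Lattices considered: integral lattices of signature $(n,1)$ whose discriminant group is $\mathbb{Z}/3\oplus D$ with $D$ $2$-periodic. For such a lattice $L$: $V_k=\{w\in L:w^2=k,\ 2wx/w^2\in\mathbb{Z}\ \forall x\in L\}$ ($k=2,6$); $\Lambda(L)=\{x\in L\otimes\mathbb{R}:x^2<0\}/\mathbb{R}^*$; cells are closures of components of the complement of the hyperplanes $w^\perp$, $w\in V_2\cup V_6$. A cell $P$ lifts to two opposite pieces $\pm P^\sharp$ in $\{x^2<0\}/\mathbb{R}_{>0}$; $g$ with $g(P)=P$ is $P$-direct if $g(P^\sharp)=P^\sharp$, $P$-reversing otherwise. $g$ is $\mathbb{Z}/3$-direct if it acts trivially on the $3$-primary part of the discriminant group, $\mathbb{Z}/3$-reversing otherwise. $L$ is achiral if for some cell $P$ there is a $\mathbb{Z}/3$-direct $P$-reversing $g$ with $g(P)=P$ (equivalently, a $\mathbb{Z}/3$-reversing $P$-direct one, since these differ by the sign $-1$). *)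

theory Defs
  imports "HOL-Analysis.Analysis"
begin

text \<open>A lattice of rank N is modelled as the standard integer lattice
  in real^'n (N = CARD('n)) equipped with an integral symmetric Gram matrix G.
  Elements of L are the integer vectors; L tensor R is real^'n.\<close>

definition bf :: "real^'n^'n \<Rightarrow> real^'n \<Rightarrow> real^'n \<Rightarrow> real" where
  "bf G x y = x \<bullet> (G *v y)"

definition latt :: "(real^'n) set" where
  "latt = {x. \<forall>i. x $ i \<in> \<int>}"

definition integral_gram :: "real^'n^'n \<Rightarrow> bool" where
  "integral_gram G \<longleftrightarrow> transpose G = G \<and> (\<forall>i j. G $ i $ j \<in> \<int>)"

text \<open>Signature (n,1), n = CARD('n) - 1 (Sylvester inertia: congruent over the
  reals to diag(1,...,1,-1)).\<close>
definition hyperbolic_sig :: "real^'n^'n \<Rightarrow> bool" where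
  "hyperbolic_sig G \<longleftrightarrow> (\<exists>(P::real^'n^'n) k. invertible P \<and>
      transpose P ** G ** P = (\<chi> i j. if i = j then (if i = k then -1 else 1) else 0))"

text \<open>Dual lattice L^*; discriminant group A = L^*/L.\<close>
definition dual :: "real^'n^'n \<Rightarrow> (real^'n) set" where
  "dual G = {x. \<forall>y\<in>latt. bf G x y \<in> \<int>}"

definition latt_cong :: "(real^'n) set \<Rightarrow> ((real^'n) \<times> (real^'n)) set" where
  "latt_cong S = {(x,y). x \<in> S \<and> y \<in> S \<and> x - y \<in> latt}"

text \<open>3-primary part of the discriminant group, as cosets x + L with 3x in L.\<close>
definition disc3 :: "real^'n^'n \<Rightarrow> (real^'n) set" where
  "disc3 G = {x \<in> dual G. 3 *\<^sub>R x \<in> latt}"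

text \<open>Discriminant group is Z/3 + D with 2D = 0: equivalently, 6A = 0 and the
  3-primary part has exactly 3 elements.\<close>
definition disc_ok :: "real^'n^'n \<Rightarrow> bool" where
  "disc_ok G \<longleftrightarrow> (\<forall>x\<in>dual G. 6 *\<^sub>R x \<in> latt) \<and>
      card (disc3 G // latt_cong (disc3 G)) = 3"

definition good_lattice :: "real^'n^'n \<Rightarrow> bool" where
  "good_lattice G \<longleftrightarrow> integral_gram G \<and> hyperbolic_sig G \<and> disc_ok G"

definition aut :: "real^'n^'n \<Rightarrow> real^'n^'n \<Rightarrow> bool" where
  "aut G M \<longleftrightarrow> (\<lambda>x. M *v x) ` latt = latt \<and>
      (\<forall>x y. bf G (M *v x) (M *v y) = bf G x y)"

definition z3_direct :: "real^'n^'n \<Rightarrow> real^'n^'n \<Rightarrow> bool" where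
  "z3_direct G M \<longleftrightarrow> (\<forall>x\<in>disc3 G. M *v x - x \<in> latt)"

definition V :: "real^'n^'n \<Rightarrow> real \<Rightarrow> (real^'n) set" where
  "V G k = {w \<in> latt. bf G w w = k \<and> (\<forall>x\<in>latt. 2 * bf G w x / k \<in> \<int>)}"

definition negcone :: "real^'n^'n \<Rightarrow> (real^'n) set" where
  "negcone G = {x. bf G x x < 0}"

definition mirrors :: "real^'n^'n \<Rightarrow> (real^'n) set" where
  "mirrors G = {x. \<exists>w \<in> V G 2 \<union> V G 6. bf G w x = 0}"

text \<open>Lifted cells: a lift P^# of a cell P, viewed as a cone in {x^2<0}
  (i.e. the preimage of P^# in {x^2<0}/R_{>0}): the closure in {x^2<0} of a
  connected component of the complement of the mirrors.\<close>
definition half_cell :: "real^'n^'n \<Rightarrow> (real^'n) set \<Rightarrow> bool" where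
  "half_cell G Q \<longleftrightarrow> (\<exists>K \<in> components (negcone G - mirrors G).
      Q = closure K \<inter> negcone G)"

text \<open>Q is a lift of the cell P; the cell P of Lambda(L) is represented by its
  preimage in {x^2<0}.\<close>
definition cell_lift :: "real^'n^'n \<Rightarrow> (real^'n) set \<Rightarrow> (real^'n) set \<Rightarrow> bool" where
  "cell_lift G P Q \<longleftrightarrow> half_cell G Q \<and> P = Q \<union> uminus ` Q"

definition cell :: "real^'n^'n \<Rightarrow> (real^'n) set \<Rightarrow> bool" where
  "cell G P \<longleftrightarrow> (\<exists>Q. cell_lift G P Q)"

definition preserves :: "real^'n^'n \<Rightarrow> (real^'n) set \<Rightarrow> bool" where
  "preserves M P \<longleftrightarrow> (\<lambda>x. M *v x) ` P = P"

definition cell_direct :: "real^'n^'n \<Rightarrow> real^'n^'n \<Rightarrow> (real^'n) set \<Rightarrow> bool" where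
  "cell_direct G M P \<longleftrightarrow> (\<exists>Q. cell_lift G P Q \<and> (\<lambda>x. M *v x) ` Q = Q)"

definition achiral :: "real^'n^'n \<Rightarrow> bool" where
  "achiral G \<longleftrightarrow> (\<exists>P M. cell G P \<and> aut G M \<and> preserves M P \<and>
      z3_direct G M \<and> \<not> cell_direct G M P)"

text \<open>Orthogonal direct sum L = L_v + Z v with v^2 = 2: basis of L_v indexed by
  'n, v is the extra basis vector indexed by None.\<close>
definition sum_gram :: "real^'n^'n \<Rightarrow> real^('n option)^('n option)" where
  "sum_gram G = (\<chi> i j. case (i, j) of (Some a, Some b) \<Rightarrow> G $ a $ b
      | (None, None) \<Rightarrow> 2 | _ \<Rightarrow> 0)"

definition emb :: "real^'n \<Rightarrow> real^('n option)" where
  "emb x = (\<chi> j. case j of Some i \<Rightarrow> x $ i | None \<Rightarrow> 0)"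

end

theory Submission
  imports Defs
begin

lemma bf_add_right: "bf G x (y + z) = bf G x y + bf G x z"
  by (simp add: bf_def matrix_vector_right_distrib inner_add_right)
lemma bf_add_left: "bf G (x + y) z = bf G x z + bf G y z"
  by (simp add: bf_def inner_add_left)
lemma bf_scale_right: "bf G x (c *\<^sub>R y) = c * bf G x y"
  by (simp add: bf_def matrix_vector_mult_scaleR)
lemma bf_scale_left: "bf G (c *\<^sub>R x) y = c * bf G x y"
  by (simp add: bf_def)
lemma bf_neg_left: "bf G (-x) y = - bf G x y" by (simp add: bf_def)
lemma bf_neg_right: "bf G x (-y) = - bf G x y"
  using bf_scale_right[of G x "-1" y] by simp
lemma bf_diff_left: "bf G (x - y) z = bf G x z - bf G y z"
  using bf_add_left[of G x "-y" z] bf_neg_left[of G y z] by simp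
lemma bf_diff_right: "bf G z (x - y) = bf G z x - bf G z y"
  using bf_add_right[of G z x "-y"] bf_neg_right[of G z y] by simp
lemma bf_zero_left[simp]: "bf G 0 y = 0" by (simp add: bf_def)
lemma bf_zero_right[simp]: "bf G x 0 = 0" by (simp add: bf_def)
lemma bf_sym: assumes "transpose G = G" shows "bf G x y = bf G y x"
proof -
  have "bf G x y = inner (x v* G) y" by (simp add: bf_def dot_lmul_matrix)
  also have "x v* G = G *v x" using assms by (metis transpose_matrix_vector)
  finally show ?thesis by (simp add: bf_def inner_commute)
qed
lemma inner_mv: "inner ((A::real^'n^'m) *v x) y = inner x (transpose A *v y)"
proof -
  have "A *v x = x v* transpose A" by simp
  thus ?thesis using dot_lmul_matrix[of x "transpose A" y] by simp
qed

lemma bf_congr: "bf G (P *v x) (P *v y) = bf (transpose P ** G ** P) x y"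
proof -
  have "bf G (P *v x) (P *v y) = inner x (transpose P *v (G *v (P *v y)))"
    unfolding bf_def by (rule inner_mv)
  also have "\<dots> = bf (transpose P ** G ** P) x y"
    unfolding bf_def by (simp only: matrix_vector_mul_assoc matrix_mul_assoc)
  finally show ?thesis .
qed

lemma sum_opt: "(\<Sum>i\<in>(UNIV::'a::finite option set). f i) = f None + (\<Sum>i\<in>UNIV. f (Some i))"
  by (simp add: UNIV_option_conv sum.reindex)

definition proj :: "real^('n::finite option) \<Rightarrow> real^'n" where "proj x = (\<chi> i. x $ Some i)"
definition vv :: "real^('n::finite option)" where "vv = (\<chi> j. case j of None \<Rightarrow> 1 | Some _ \<Rightarrow> 0)"

lemma proj_nth[simp]: "proj x $ i = x $ Some i" by (simp add: proj_def)
lemma emb_nth_Some[simp]: "emb x $ Some i = x $ i" by (simp add: emb_def)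
lemma emb_nth_None[simp]: "emb x $ None = 0" by (simp add: emb_def)
lemma vv_nth_Some[simp]: "vv $ Some i = 0" by (simp add: vv_def)
lemma vv_nth_None[simp]: "vv $ None = 1" by (simp add: vv_def)
lemma proj_emb[simp]: "proj (emb x) = x" by (simp add: vec_eq_iff)
lemma decomp: "x = emb (proj x) + (x $ None) *\<^sub>R vv"
  unfolding vec_eq_iff
proof
  fix i show "x $ i = (emb (proj x) + x $ None *\<^sub>R vv) $ i" by (cases i) auto
qed

lemma sg_mult_None: "(sum_gram G *v y) $ None = 2 * y $ None"
  by (simp add: matrix_vector_mult_def sum_gram_def sum_opt)
lemma sg_mult_Some: "(sum_gram G *v y) $ Some a = (G *v proj y) $ a"
  by (simp add: matrix_vector_mult_def sum_gram_def sum_opt)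
lemma bf_sg: "bf (sum_gram G) x y = bf G (proj x) (proj y) + 2 * x $ None * y $ None"
  by (simp add: bf_def inner_vec_def sum_opt sg_mult_None sg_mult_Some)

section \<open>Lattice and automorphisms\<close>

lemma latt_add: "x \<in> latt \<Longrightarrow> y \<in> latt \<Longrightarrow> x + y \<in> latt"
  by (simp add: latt_def Ints_add)
lemma latt_neg: "x \<in> latt \<Longrightarrow> - x \<in> latt"
  by (simp add: latt_def Ints_minus)
lemma latt_diff: "x \<in> latt \<Longrightarrow> y \<in> latt \<Longrightarrow> x - y \<in> latt"
  by (simp add: latt_def Ints_diff)
lemma latt_scale: "c \<in> \<int> \<Longrightarrow> x \<in> latt \<Longrightarrow> c *\<^sub>R x \<in> latt"
  by (simp add: latt_def Ints_mult)
lemma latt_zero: "0 \<in> latt" by (simp add: latt_def)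
lemma axis_latt: "axis i (1::real) \<in> latt" by (simp add: latt_def axis_def)

lemma mv_sum: "M *v (\<Sum>i\<in>S. f i) = (\<Sum>i\<in>S. M *v f i)"
  by (induction S rule: infinite_finite_induct) (auto simp: matrix_vector_right_distrib)

lemma aut_surj:
  fixes M :: "real^'m^'m"
  assumes "aut G M" shows "surj (\<lambda>x. M *v x)"
proof -
  have im: "(\<lambda>x. M *v x) ` latt = latt" using assms unfolding aut_def by blast
  have ex: "\<exists>b. M *v b = axis i 1" for i
  proof -
    have "axis i 1 \<in> (\<lambda>x. M *v x) ` latt" unfolding im by (rule axis_latt)
    then obtain c where "axis i 1 = M *v c" by blast
    thus ?thesis by (intro exI[of _ c]) simp
  qed
  define b where "b i = (SOME b. M *v b = axis i 1)" for i
  have b: "M *v b i = axis i 1" for i unfolding b_def by (rule someI_ex[OF ex])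
  show ?thesis
  proof (rule surjI[where f = "\<lambda>x. \<Sum>i\<in>UNIV. x$i *\<^sub>R b i"])
    fix x :: "real^'m"
    have "M *v (\<Sum>i\<in>UNIV. x$i *\<^sub>R b i) = (\<Sum>i\<in>UNIV. x$i *\<^sub>R (M *v b i))"
      by (simp add: mv_sum matrix_vector_mult_scaleR)
    also have "\<dots> = x" using basis_expansion[of x] by (simp add: b scalar_mult_eq_scaleR)
    finally show "M *v (\<Sum>i\<in>UNIV. x$i *\<^sub>R b i) = x" .
  qed
qed

lemma aut_inv:
  fixes G :: "real^'m^'m"
  fixes M :: "real^'m^'m"
  assumes "aut G M"
  obtains N where "aut G N" "\<And>x. M *v (N *v x) = x" "\<And>x. N *v (M *v x) = x"
proof -
  obtain N where MN: "M ** N = mat 1" using aut_surj[OF assms] matrix_right_invertible_surjective by blast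
  hence NM: "N ** M = mat 1" using matrix_left_right_inverse by blast
  have 1: "\<And>x. M *v (N *v x) = x" by (simp add: matrix_vector_mul_assoc MN)
  have 2: "\<And>x. N *v (M *v x) = x" by (simp add: matrix_vector_mul_assoc NM)
  have "aut G N" unfolding aut_def
  proof (intro conjI allI)
    show "(\<lambda>x. N *v x) ` latt = latt"
    proof
      show "(\<lambda>x. N *v x) ` latt \<subseteq> latt"
      proof
        fix y :: "real^'m" assume "y \<in> (\<lambda>x. N *v x) ` latt"
        then obtain x where x: "x \<in> latt" "y = N *v x" by blast
        then obtain z where "z \<in> latt" "x = M *v z" using assms unfolding aut_def by blast
        thus "y \<in> latt" using x 2 by simp
      qed
      show "latt \<subseteq> (\<lambda>x. N *v x) ` latt"
      proof
        fix y :: "real^'m" assume y: "y \<in> latt"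
        have "M *v y \<in> latt" using assms y unfolding aut_def by blast
        thus "y \<in> (\<lambda>x. N *v x) ` latt" using 2[of y] by (metis imageI)
      qed
    qed
    fix x y
    show "bf G (N *v x) (N *v y) = bf G x y"
    proof -
      have "bf G (M *v (N *v x)) (M *v (N *v y)) = bf G (N *v x) (N *v y)" using assms unfolding aut_def by blast
      thus ?thesis using 1 by simp
    qed
  qed
  thus ?thesis using that 1 2 by blast
qed

lemma aut_latt: "aut (G::real^'m^'m) M \<Longrightarrow> x \<in> latt \<Longrightarrow> M *v x \<in> latt"
  unfolding aut_def by blast
lemma aut_latt_old: "aut G M \<Longrightarrow> x \<in> latt \<Longrightarrow> M *v x \<in> latt"
  unfolding aut_def by blast
lemma aut_bf: "aut (G::real^'m^'m) M \<Longrightarrow> bf G (M *v x) (M *v y) = bf G x y"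
  unfolding aut_def by blast

lemma aut_V:
  fixes G :: "real^'m^'m" assumes "aut G M" "w \<in> V G k" shows "M *v w \<in> V G k"
proof -
  have w: "w \<in> latt" "bf G w w = k" "\<forall>x\<in>latt. 2 * bf G w x / k \<in> \<int>" using assms(2) unfolding V_def by auto
  have "\<forall>x\<in>latt. 2 * bf G (M *v w) x / k \<in> \<int>"
  proof
    fix x :: "real^'m" assume "x \<in> latt"
    then obtain z where "z \<in> latt" "x = M *v z" using assms(1) unfolding aut_def by blast
    thus "2 * bf G (M *v w) x / k \<in> \<int>" using w aut_bf[OF assms(1)] by simp
  qed
  thus ?thesis using w aut_latt[OF assms(1)] aut_bf[OF assms(1)] unfolding V_def by simp
qed

lemma aut_mirrors1:
  fixes G :: "real^'m^'m" assumes "aut G M" "x \<in> mirrors G" shows "M *v x \<in> mirrors G"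
proof -
  obtain w where w: "w \<in> V G 2 \<union> V G 6" "bf G w x = 0" using assms(2) unfolding mirrors_def by blast
  have "M *v w \<in> V G 2 \<union> V G 6" using w(1) aut_V[OF assms(1)] by blast
  moreover have "bf G (M *v w) (M *v x) = 0" using w(2) aut_bf[OF assms(1)] by simp
  ultimately show ?thesis unfolding mirrors_def by blast
qed

lemma aut_mirrors:
  fixes G :: "real^'m^'m" assumes "aut G M" shows "M *v x \<in> mirrors G \<longleftrightarrow> x \<in> mirrors G"
proof -
  obtain N where "aut G N" "\<And>x. N *v (M *v x) = x" using aut_inv[OF assms] by metis
  thus ?thesis using aut_mirrors1[OF assms, of x] aut_mirrors1[of G N "M *v x"] by auto
qed

lemma aut_negcone:
  fixes G :: "real^'m^'m" assumes "aut G M" shows "M *v x \<in> negcone G \<longleftrightarrow> x \<in> negcone G"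
  using aut_bf[OF assms] unfolding negcone_def by simp

definition UU :: "real^'n^'n \<Rightarrow> (real^'n) set" where "UU G = negcone G - mirrors G"

lemma aut_UU:
  fixes G :: "real^'m^'m" assumes "aut G M" shows "M *v x \<in> UU G \<longleftrightarrow> x \<in> UU G"
  using aut_negcone[OF assms] aut_mirrors[OF assms] unfolding UU_def by simp

lemma neg_negcone: "- x \<in> negcone G \<longleftrightarrow> x \<in> negcone G"
  by (simp add: negcone_def bf_neg_left bf_neg_right)

lemma neg_mirrors: "- x \<in> mirrors G \<longleftrightarrow> x \<in> mirrors G"
  by (simp add: mirrors_def bf_neg_right)

lemma neg_UU: "- x \<in> UU G \<longleftrightarrow> x \<in> UU G"
  by (simp add: UU_def neg_negcone neg_mirrors)

lemma comp_image:
  fixes f g :: "'a::topological_space \<Rightarrow> 'a"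
  assumes "\<And>x. f x \<in> U \<longleftrightarrow> x \<in> U" "\<And>x. g (f x) = x" "\<And>x. f (g x) = x"
    "continuous_on UNIV f" "continuous_on UNIV g" "p \<in> U"
  shows "f ` connected_component_set U p = connected_component_set U (f p)"
proof
  have gU: "g x \<in> U \<longleftrightarrow> x \<in> U" for x using assms(1)[of "g x"] assms(3)[of x] by simp
  have c1: "connected (f ` connected_component_set U p)"
    by (rule connected_continuous_image[OF continuous_on_subset[OF assms(4) subset_UNIV] connected_connected_component])
  have s1: "f ` connected_component_set U p \<subseteq> U"
  proof
    fix y assume "y \<in> f ` connected_component_set U p"
    then obtain x where "x \<in> connected_component_set U p" "y = f x" by blast
    hence "x \<in> U" "y = f x" using connected_component_subset by blast+
    thus "y \<in> U" using assms(1)[of x] by simp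
  qed
  have "p \<in> connected_component_set U p" using assms(6) by (simp add: connected_component_refl)
  hence "f p \<in> f ` connected_component_set U p" by (rule imageI)
  thus "f ` connected_component_set U p \<subseteq> connected_component_set U (f p)"
    by (rule connected_component_maximal[OF _ c1 s1])
  have c2: "connected (g ` connected_component_set U (f p))"
    by (rule connected_continuous_image[OF continuous_on_subset[OF assms(5) subset_UNIV] connected_connected_component])
  have s2: "g ` connected_component_set U (f p) \<subseteq> U"
  proof
    fix y assume "y \<in> g ` connected_component_set U (f p)"
    then obtain x where "x \<in> connected_component_set U (f p)" "y = g x" by blast
    hence "x \<in> U" "y = g x" using connected_component_subset by blast+
    thus "y \<in> U" using gU[of x] by simp
  qed
  have fpC: "f p \<in> connected_component_set U (f p)"
    using assms(1)[of p] assms(6) by (simp add: connected_component_refl)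
  have "g (f p) \<in> g ` connected_component_set U (f p)" using fpC by (rule imageI)
  hence "p \<in> g ` connected_component_set U (f p)" using assms(2)[of p] by simp
  hence gsub: "g ` connected_component_set U (f p) \<subseteq> connected_component_set U p"
    by (rule connected_component_maximal[OF _ c2 s2])
  show "connected_component_set U (f p) \<subseteq> f ` connected_component_set U p"
  proof
    fix y assume "y \<in> connected_component_set U (f p)"
    hence "g y \<in> connected_component_set U p" using gsub by blast
    hence "f (g y) \<in> f ` connected_component_set U p" by (rule imageI)
    thus "y \<in> f ` connected_component_set U p" using assms(3)[of y] by simp
  qed
qed

section \<open>Lorentzian property\<close>

definition lor :: "real^'m^'m \<Rightarrow> bool" where
  "lor H \<longleftrightarrow> (\<forall>x0 w. bf H x0 x0 < 0 \<longrightarrow> bf H w x0 = 0 \<longrightarrow> w \<noteq> 0 \<longrightarrow> bf H w w > 0)"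

lemma diag_form:
  fixes y :: "real^'m"
  assumes "y $ k = 0"
  shows "bf ((\<chi> i j. if i = j then (if i = k then -1 else 1) else 0)::real^'m^'m) y y = (\<Sum>i\<in>UNIV. (y $ i)^2)"
proof -
  have "\<And>i. (((\<chi> i j. if i = j then (if i = k then -1 else 1) else 0)::real^'m^'m) *v y) $ i = (if i = k then - y $ i else y $ i)"
  proof -
    fix i
    have "(((\<chi> i j. if i = j then (if i = k then -1 else 1) else 0)::real^'m^'m) *v y) $ i
       = (\<Sum>j\<in>UNIV. if i = j then (if i = k then -1 else 1) * y$j else 0)"
      unfolding matrix_vector_mult_def vec_lambda_beta by (rule sum.cong) auto
    thus "(((\<chi> i j. if i = j then (if i = k then -1 else 1) else 0)::real^'m^'m) *v y) $ i = (if i = k then - y $ i else y $ i)"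
      by simp
  qed
  thus ?thesis using assms by (auto simp: bf_def inner_vec_def power2_eq_square intro!: sum.cong)
qed

lemma hyp_lor:
  fixes H :: "real^'m^'m"
  assumes sym: "transpose H = H" and hyp: "hyperbolic_sig H"
  shows "lor H"
  unfolding lor_def
proof (intro allI impI)
  fix x0 w :: "real^'m"
  assume q0: "bf H x0 x0 < 0" and o: "bf H w x0 = 0" and w0: "w \<noteq> 0"
  obtain P :: "real^'m^'m" and k where P: "invertible P" and D: "transpose P ** H ** P = (\<chi> i j. if i = j then (if i = k then -1 else 1) else 0)"
    using hyp unfolding hyperbolic_sig_def by blast
  obtain N where PN: "P ** N = mat 1" using P unfolding invertible_def by blast
  have PNx: "\<And>x. P *v (N *v x) = x" by (simp add: matrix_vector_mul_assoc PN)
  have key: "bf H u u \<ge> 0 \<and> (bf H u u = 0 \<longrightarrow> u = 0)" if "(N *v u) $ k = 0" for u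
  proof -
    have "bf H u u = bf H (P *v (N *v u)) (P *v (N *v u))" by (simp add: PNx)
    also have "\<dots> = bf (transpose P ** H ** P) (N *v u) (N *v u)" by (rule bf_congr)
    also have "\<dots> = (\<Sum>i\<in>UNIV. ((N *v u) $ i)^2)" unfolding D by (rule diag_form[OF that])
    finally have e: "bf H u u = (\<Sum>i\<in>UNIV. ((N *v u) $ i)^2)" .
    have "bf H u u = 0 \<longrightarrow> u = 0"
    proof
      assume "bf H u u = 0"
      hence "\<forall>i\<in>UNIV. ((N *v u) $ i)^2 = 0" using e by (simp add: sum_nonneg_eq_0_iff)
      hence "N *v u = 0" by (simp add: vec_eq_iff)
      thus "u = 0" using PNx[of u] by simp
    qed
    thus ?thesis using e by (simp add: sum_nonneg)
  qed
  show "bf H w w > 0"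
  proof (rule ccontr)
    assume nw: "\<not> bf H w w > 0"
    define a where "a = (N *v x0) $ k"
    define b where "b = (N *v w) $ k"
    show False
    proof (cases "b = 0")
      case True
      hence "bf H w w \<ge> 0 \<and> (bf H w w = 0 \<longrightarrow> w = 0)" using key[of w] True b_def by simp
      thus False using nw w0 by linarith
    next
      case False
      define u where "u = b *\<^sub>R x0 - a *\<^sub>R w"
      have "(N *v u) $ k = 0" by (simp add: u_def a_def b_def matrix_vector_mult_diff_distrib matrix_vector_mult_scaleR)
      hence ge: "bf H u u \<ge> 0" using key[of u] by simp
      have o2: "bf H x0 w = 0" using o bf_sym[OF sym, of x0 w] by simp
      have "bf H u u = b*b * bf H x0 x0 - b*a * bf H x0 w - a*b * bf H w x0 + a*a * bf H w w"
        unfolding u_def bf_diff_left bf_diff_right bf_scale_left bf_scale_right by (simp add: algebra_simps)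
      hence "bf H u u = b*b * bf H x0 x0 + a*a * bf H w w" using o o2 by simp
      moreover have "b*b * bf H x0 x0 < 0"
      proof -
        have "b*b > 0" using False not_real_square_gt_zero[of b] by blast
        thus ?thesis using q0 by (rule mult_pos_neg)
      qed
      moreover have "a*a * bf H w w \<le> 0" by (rule mult_nonneg_nonpos[OF zero_le_square]) (use nw in simp)
      ultimately show False using ge by linarith
    qed
  qed
qed


section \<open>Local finiteness\<close>

lemma cont_bf:
  fixes H :: "real^'m^'m" and f g :: "'a::topological_space \<Rightarrow> real^'m"
  assumes "continuous_on S f" "continuous_on S g"
  shows "continuous_on S (\<lambda>w. bf H (f w) (g w))"
proof -
  have 1: "continuous_on S (\<lambda>w. H *v g w)"
    by (rule bounded_linear.continuous_on[OF matrix_vector_mul_bounded_linear assms(2)])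
  have "continuous_on S (\<lambda>w. inner (f w) (H *v g w))" by (rule continuous_on_inner[OF assms(1) 1])
  thus ?thesis by (simp add: bf_def)
qed

lemma bf_bound: fixes H :: "real^'m^'m" obtains K where "K > 0" "\<And>x y. \<bar>bf H x y\<bar> \<le> norm x * norm y * K"
proof -
  obtain K where K: "K > 0" "\<And>y. norm (H *v y) \<le> norm y * K"
    using bounded_linear.pos_bounded[OF matrix_vector_mul_bounded_linear[of H]] by blast
  have "\<bar>bf H x y\<bar> \<le> norm x * norm y * K" for x y
  proof -
    have "\<bar>bf H x y\<bar> \<le> norm x * norm (H *v y)" unfolding bf_def by (rule Cauchy_Schwarz_ineq2)
    also have "\<dots> \<le> norm x * (norm y * K)" using K(2) by (simp add: mult_left_mono)
    finally show ?thesis by (simp add: mult.assoc)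
  qed
  thus ?thesis using that K(1) by blast
qed

lemma qineq:
  fixes H :: "real^'m^'m"
  assumes sym: "transpose H = H" and L: "lor H" and q0: "bf H x0 x0 < 0"
  obtains A B where "A \<ge> 0" "B > 0" "\<And>w. (norm w)^2 \<le> A * (bf H w x0)^2 + B * bf H w w"
proof -
  define q where "q = bf H x0 x0"
  define lam where "lam = 2 / (- q)"
  define F where "F = (\<lambda>w. bf H w w + lam * (bf H w x0)^2)"
  have lam: "lam > 0" using q0 by (simp add: lam_def q_def)
  have Fpos: "F w > 0" if "w \<noteq> 0" for w
  proof -
    define a where "a = bf H w x0 / q"
    define w' where "w' = w - a *\<^sub>R x0"
    have qne: "q \<noteq> 0" using q0 q_def by simp
    have o: "bf H w' x0 = 0" by (simp add: w'_def bf_diff_left bf_scale_left a_def q_def[symmetric] qne)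
    have o2: "bf H x0 w' = 0" using o bf_sym[OF sym, of x0 w'] by simp
    have ww: "bf H w w = bf H w' w' + a*a*q"
    proof -
      have "w = w' + a *\<^sub>R x0" by (simp add: w'_def)
      hence "bf H w w = bf H (w' + a *\<^sub>R x0) (w' + a *\<^sub>R x0)" by simp
      also have "\<dots> = bf H w' w' + a*a*q"
        by (simp add: bf_add_left bf_add_right bf_scale_left bf_scale_right o o2 q_def)
      finally show ?thesis .
    qed
    have wx: "bf H w x0 = a * q" using qne by (simp add: a_def)
    have "F w = bf H w' w' + a*a*(- q)"
      unfolding F_def ww wx lam_def using qne by (simp add: power2_eq_square field_simps)
    moreover have "w' \<noteq> 0 \<longrightarrow> bf H w' w' > 0"
      using L o q0 unfolding lor_def q_def by blast
    moreover have "w' = 0 \<longrightarrow> a \<noteq> 0" using that by (auto simp: w'_def)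
    moreover have "a*a*(-q) \<ge> 0" by (rule mult_nonneg_nonneg[OF zero_le_square]) (use q0 q_def in simp)
    moreover have "a \<noteq> 0 \<longrightarrow> a*a*(-q) > 0"
    proof
      assume "a \<noteq> 0"
      hence "a*a > 0" using not_real_square_gt_zero[of a] by blast
      moreover have "-q > 0" using q0 q_def by simp
      ultimately show "a*a*(-q) > 0" by (rule mult_pos_pos)
    qed
    ultimately show ?thesis by (cases "w' = 0") auto
  qed
  have contF: "continuous_on UNIV F"
  proof -
    have c1: "continuous_on UNIV (\<lambda>w. bf H w w)" by (rule cont_bf[OF continuous_on_id continuous_on_id])
    have c2: "continuous_on UNIV (\<lambda>w. bf H w x0)" by (rule cont_bf[OF continuous_on_id continuous_on_const])
    have c3: "continuous_on UNIV (\<lambda>w. lam * (bf H w x0)^2)"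
      by (rule continuous_on_mult[OF continuous_on_const continuous_on_power[OF c2]])
    show ?thesis unfolding F_def by (rule continuous_on_add[OF c1 c3])
  qed
  have ne: "sphere (0::real^'m) 1 \<noteq> {}"
  proof -
    have "axis undefined 1 \<in> sphere (0::real^'m) 1" by simp
    thus ?thesis by blast
  qed
  obtain u where u: "u \<in> sphere 0 1" "\<And>y. y \<in> sphere 0 1 \<Longrightarrow> F u \<le> F y"
    using continuous_attains_inf[OF compact_sphere ne continuous_on_subset[OF contF]] by blast
  define c where "c = F u"
  have "u \<noteq> 0" using u(1) by auto
  hence c: "c > 0" using Fpos by (simp add: c_def)
  have hom: "F (t *\<^sub>R w) = t^2 * F w" for t w
    by (simp add: F_def bf_scale_left bf_scale_right power2_eq_square algebra_simps)
  have main: "c * (norm w)^2 \<le> F w" for w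
  proof (cases "w = 0")
    case True thus ?thesis by (simp add: F_def)
  next
    case False
    define y where "y = (1 / norm w) *\<^sub>R w"
    have "y \<in> sphere 0 1" using False by (simp add: y_def)
    hence cy: "c \<le> F y" using u(2) c_def by blast
    have "F w = (norm w)^2 * F y"
      using hom[of "norm w" y] False by (simp add: y_def)
    moreover have "c * (norm w)^2 \<le> F y * (norm w)^2" by (rule mult_right_mono[OF cy]) simp
    ultimately show ?thesis by (simp add: mult.commute)
  qed
  show ?thesis
  proof (rule that[of "lam / c" "1 / c"])
    show "lam / c \<ge> 0" using lam c by simp
    show "1 / c > 0" using c by simp
    fix w
    have "(norm w)^2 \<le> F w / c" using main[of w] c by (simp add: pos_le_divide_eq mult.commute)
    moreover have "F w / c = lam / c * (bf H w x0)^2 + 1 / c * bf H w w"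
      unfolding F_def using c by (simp add: field_simps)
    ultimately show "(norm w)^2 \<le> lam / c * (bf H w x0)^2 + 1 / c * bf H w w" by simp
  qed
qed

lemma finite_latt_ball: "finite {w::real^'m. w \<in> latt \<and> norm w \<le> R}"
proof -
  define S where "S = {w::real^'m. w \<in> latt \<and> norm w \<le> R}"
  define f where "f = (\<lambda>w::real^'m. \<lambda>i. \<lfloor>w $ i\<rfloor>)"
  define N where "N = \<lceil>R\<rceil>"
  have "f ` S \<subseteq> PiE UNIV (\<lambda>_. {-N..N})"
  proof
    fix g assume "g \<in> f ` S"
    then obtain w where w: "w \<in> S" "g = f w" by blast
    have "\<bar>w $ i\<bar> \<le> R" for i using w(1) component_le_norm_cart[of w i] by (simp add: S_def)
    hence "-N \<le> \<lfloor>w $ i\<rfloor> \<and> \<lfloor>w $ i\<rfloor> \<le> N" for i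
    proof -
      have a: "-R \<le> w $ i" "w $ i \<le> R" using \<open>\<bar>w $ i\<bar> \<le> R\<close> by auto
      have "\<lfloor>-R\<rfloor> \<le> \<lfloor>w $ i\<rfloor>" using a(1) by (rule floor_mono)
      moreover have "\<lfloor>w $ i\<rfloor> \<le> \<lfloor>R\<rfloor>" using a(2) by (rule floor_mono)
      moreover have "\<lfloor>R\<rfloor> \<le> \<lceil>R\<rceil>" by (rule floor_le_ceiling)
      ultimately show ?thesis unfolding N_def floor_minus by linarith
    qed
    thus "g \<in> PiE UNIV (\<lambda>_. {-N..N})" using w by (simp add: f_def PiE_iff)
  qed
  hence "finite (f ` S)" by (rule finite_subset) (simp add: finite_PiE)
  moreover have "inj_on f S"
  proof
    fix x y assume "x \<in> S" "y \<in> S" "f x = f y"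
    hence "\<And>i. \<lfloor>x $ i\<rfloor> = \<lfloor>y $ i\<rfloor>" "\<And>i. x $ i \<in> \<int>" "\<And>i. y $ i \<in> \<int>"
      by (auto simp: f_def S_def latt_def fun_eq_iff)
    show "x = y" unfolding vec_eq_iff
    proof
      fix i
      obtain a where a: "x $ i = of_int a" using \<open>\<And>i. x $ i \<in> \<int>\<close> Ints_cases by blast
      obtain b where b: "y $ i = of_int b" using \<open>\<And>i. y $ i \<in> \<int>\<close> Ints_cases by blast
      have "a = b" using \<open>\<And>i. \<lfloor>x $ i\<rfloor> = \<lfloor>y $ i\<rfloor>\<close>[of i] a b by simp
      thus "x $ i = y $ i" using a b by simp
    qed
  qed
  ultimately show ?thesis using finite_imageD S_def by blast
qed

lemma LF2:
  fixes H :: "real^'m^'m"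
  assumes sym: "transpose H = H" and L: "lor H" and q0: "bf H x0 x0 < 0"
  obtains r where "r > 0" "ball x0 r \<subseteq> negcone H"
    "\<And>w x. w \<in> V H 2 \<union> V H 6 \<Longrightarrow> x \<in> ball x0 r \<Longrightarrow> bf H w x = 0 \<Longrightarrow> bf H w x0 = 0"
proof -
  obtain A B where AB: "A \<ge> 0" "B > 0" "\<And>w. (norm w)^2 \<le> A * (bf H w x0)^2 + B * bf H w w"
    using qineq[OF sym L q0] by blast
  obtain K where K: "K > 0" "\<And>x y. \<bar>bf H x y\<bar> \<le> norm x * norm y * K" using bf_bound by blast
  define r1 where "r1 = 1 / (K * (A + 1))"
  have r1: "r1 > 0" using K AB by (simp add: r1_def)
  have r1b: "A * (r1 * K)^2 \<le> 1/2"
  proof -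
    have "r1 * K = 1 / (A + 1)" using K by (simp add: r1_def)
    hence "A * (r1 * K)^2 = A / (A+1)^2" by (simp add: power2_eq_square)
    also have "\<dots> \<le> 1/2"
    proof -
      have "2 * A \<le> (A+1)^2" by (simp add: power2_eq_square algebra_simps)
      thus ?thesis using AB(1) by (simp add: field_simps)
    qed
    finally show ?thesis .
  qed
  have "open (negcone H)"
  proof -
    have "negcone H = (\<lambda>x. bf H x x) -` {..<0}" by (auto simp: negcone_def)
    moreover have "continuous_on UNIV (\<lambda>x. bf H x x)" by (rule cont_bf[OF continuous_on_id continuous_on_id])
    ultimately show ?thesis using open_vimage[of "{..<0::real}"] by auto
  qed
  moreover have "x0 \<in> negcone H" using q0 by (simp add: negcone_def)
  ultimately obtain r2 where r2: "r2 > 0" "ball x0 r2 \<subseteq> negcone H"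
    using open_contains_ball_eq[of "negcone H" x0] by auto
  define F where "F = {w::real^'m. w \<in> latt \<and> norm w \<le> 12 * B + 1}"
  have finF: "finite F" unfolding F_def by (rule finite_latt_ball)
  have inF: "w \<in> F" if w: "w \<in> V H 2 \<union> V H 6" and x: "x \<in> ball x0 r1" and o: "bf H w x = 0" for w x
  proof -
    have wl: "w \<in> latt" and qw: "bf H w w \<le> 6" using w by (auto simp: V_def)
    have "bf H w x0 = bf H w (x0 - x)" by (simp add: bf_diff_right o)
    moreover have "norm (x0 - x) < r1" using x by (simp add: dist_norm)
    moreover have "norm w * norm (x0 - x) * K \<le> norm w * r1 * K"
      using calculation(2) K(1) by (intro mult_right_mono mult_left_mono) auto
    ultimately have "\<bar>bf H w x0\<bar> \<le> norm w * (r1 * K)"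
      using K(2)[of w "x0 - x"] by (simp add: mult.assoc)
    hence "\<bar>bf H w x0\<bar>^2 \<le> (norm w * (r1 * K))^2"
      by (intro power_mono) auto
    hence "(bf H w x0)^2 \<le> (norm w)^2 * (r1 * K)^2"
      by (simp add: power_mult_distrib)
    hence "A * (bf H w x0)^2 \<le> A * ((norm w)^2 * (r1 * K)^2)"
      using AB(1) by (rule mult_left_mono)
    also have "\<dots> = (norm w)^2 * (A * (r1 * K)^2)" by (simp add: algebra_simps)
    also have "\<dots> \<le> (norm w)^2 * (1/2)" using r1b by (intro mult_left_mono) auto
    moreover have "B * bf H w w \<le> B * 6" using qw AB(2) by (simp add: mult_left_mono)
    ultimately have "(norm w)^2 \<le> (norm w)^2 / 2 + B * 6"
      using AB(3)[of w] by linarith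
    hence n2: "(norm w)^2 \<le> 12 * B" by simp
    have "norm w \<le> 12 * B + 1"
    proof (cases "norm w \<le> 1")
      case True thus ?thesis using AB(2) by simp
    next
      case False
      hence "1 * norm w \<le> norm w * norm w" by (intro mult_right_mono) auto
      hence "norm w \<le> (norm w)^2" by (simp add: power2_eq_square)
      thus ?thesis using n2 by simp
    qed
    thus ?thesis using wl by (simp add: F_def)
  qed
  define Ob where "Ob = ball x0 (min r1 r2) \<inter> \<Inter>((\<lambda>w. {x. bf H w x \<noteq> 0}) ` {w \<in> F. bf H w x0 \<noteq> 0})"
  have "open Ob"
  proof -
    have "open {x. bf H w x \<noteq> 0}" for w
    proof -
      have "{x. bf H w x \<noteq> 0} = (\<lambda>x. bf H w x) -` (- {0})" by auto
      moreover have "continuous_on UNIV (\<lambda>x. bf H w x)" by (rule cont_bf[OF continuous_on_const continuous_on_id])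
      ultimately show ?thesis using open_vimage[of "- {0::real}"] by auto
    qed
    hence "open (\<Inter>((\<lambda>w. {x. bf H w x \<noteq> 0}) ` {w \<in> F. bf H w x0 \<noteq> 0}))"
      using finF by (intro open_Inter) auto
    thus ?thesis unfolding Ob_def by (intro open_Int open_ball)
  qed
  moreover have "x0 \<in> Ob" using r1 r2 by (simp add: Ob_def)
  ultimately obtain r where r: "r > 0" "ball x0 r \<subseteq> Ob" using open_contains_ball_eq[of Ob x0] by auto
  show ?thesis
  proof (rule that[of r])
    show "r > 0" by fact
    show "ball x0 r \<subseteq> negcone H"
    proof
      fix x assume "x \<in> ball x0 r"
      hence "x \<in> Ob" using r(2) by blast
      hence "x \<in> ball x0 r2" by (simp add: Ob_def)
      thus "x \<in> negcone H" using r2(2) by blast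
    qed
    fix w x assume w: "w \<in> V H 2 \<union> V H 6" and x: "x \<in> ball x0 r" and o: "bf H w x = 0"
    have x1: "x \<in> ball x0 r1" and xO: "x \<in> Ob" using x r(2) by (auto simp: Ob_def)
    have "w \<in> F" using inF[OF w x1 o] .
    show "bf H w x0 = 0"
    proof (rule ccontr)
      assume "bf H w x0 \<noteq> 0"
      hence "w \<in> {w \<in> F. bf H w x0 \<noteq> 0}" using \<open>w \<in> F\<close> by blast
      hence "x \<in> {x. bf H w x \<noteq> 0}" using xO unfolding Ob_def by blast
      thus False using o by simp
    qed
  qed
qed

section \<open>Sum lattice\<close>

lemma emb_add: "emb (x + y) = emb x + emb y" by (simp add: vec_eq_iff emb_def split: option.split)
lemma emb_scale: "emb (c *\<^sub>R x) = c *\<^sub>R emb x" by (simp add: vec_eq_iff emb_def split: option.split)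
lemma emb_neg: "emb (- x) = - emb x" by (simp add: vec_eq_iff emb_def split: option.split)
lemma emb_diff: "emb (x - y) = emb x - emb y" by (simp add: vec_eq_iff emb_def split: option.split)
lemma emb_zero: "emb 0 = 0" by (simp add: vec_eq_iff emb_def split: option.split)
lemma emb_inj: "emb x = emb y \<longleftrightarrow> x = y"
  by (metis proj_emb)
lemma emb_eq0: "emb x = 0 \<longleftrightarrow> x = 0" using emb_inj[of x 0] unfolding emb_zero .
lemma proj_add: "proj (x + y) = proj x + proj y" by (simp add: vec_eq_iff)
lemma proj_scale: "proj (c *\<^sub>R x) = c *\<^sub>R proj x" by (simp add: vec_eq_iff)
lemma proj_vv: "proj vv = 0" by (simp add: vec_eq_iff)
lemma norm_emb: "norm (emb x) = norm x"
  by (simp add: norm_vec_def L2_set_def sum_opt)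

lemma bf_sg_emb: "bf (sum_gram G) (emb x) (emb y) = bf G x y" by (simp add: bf_sg)
lemma bf_sg_vv: "bf (sum_gram G) vv vv = 2" by (simp add: bf_sg proj_vv)
lemma bf_sg_emb_vv: "bf (sum_gram G) (emb x) vv = 0" by (simp add: bf_sg proj_vv)
lemma bf_sg_vv_emb: "bf (sum_gram G) vv (emb x) = 0" by (simp add: bf_sg proj_vv)
lemma bf_sg_w_emb: "bf (sum_gram G) w (emb y) = bf G (proj w) y" by (simp add: bf_sg)
lemma bf_sg_w_vv: "bf (sum_gram G) w vv = 2 * w $ None" by (simp add: bf_sg proj_vv)

lemma latt_iff: "x \<in> latt \<longleftrightarrow> (\<forall>i. x $ i \<in> \<int>)" by (simp add: latt_def)
lemma emb_latt: "emb x \<in> latt \<longleftrightarrow> x \<in> latt"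
proof
  assume "emb x \<in> latt" thus "x \<in> latt" unfolding latt_iff using emb_nth_Some by metis
next
  assume "x \<in> latt" thus "emb x \<in> latt" unfolding latt_iff by (auto simp: emb_def split: option.split)
qed
lemma vv_latt: "vv \<in> latt" unfolding latt_iff by (auto simp: vv_def split: option.split)
lemma latt_sum_iff: "x \<in> latt \<longleftrightarrow> proj x \<in> latt \<and> x $ None \<in> \<int>"
proof
  assume "x \<in> latt" thus "proj x \<in> latt \<and> x $ None \<in> \<int>" unfolding latt_iff by simp
next
  assume a: "proj x \<in> latt \<and> x $ None \<in> \<int>"
  show "x \<in> latt" unfolding latt_iff
  proof
    fix i show "x $ i \<in> \<int>" using a unfolding latt_iff by (cases i) auto
  qed
qed

lemma sg_sym: assumes "transpose (sum_gram G) = sum_gram G" shows "transpose G = G"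
proof -
  have "G $ a $ b = G $ b $ a" for a b
  proof -
    have "transpose (sum_gram G) $ Some a $ Some b = sum_gram G $ Some a $ Some b" using assms by simp
    thus ?thesis by (simp add: transpose_def sum_gram_def)
  qed
  thus ?thesis by (simp add: vec_eq_iff transpose_def)
qed

lemma lor_G: assumes "lor (sum_gram G)" shows "lor G"
  unfolding lor_def
proof (intro allI impI)
  fix x0 w assume "bf G x0 x0 < 0" "bf G w x0 = 0" "w \<noteq> 0"
  hence "bf (sum_gram G) (emb x0) (emb x0) < 0" "bf (sum_gram G) (emb w) (emb x0) = 0" "emb w \<noteq> 0"
    by (auto simp: bf_sg_emb emb_eq0)
  hence "bf (sum_gram G) (emb w) (emb w) > 0" using assms unfolding lor_def by blast
  thus "bf G w w > 0" by (simp add: bf_sg_emb)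
qed

definition ext :: "real^'n^'n \<Rightarrow> real^('n::finite option)^('n option)" where
  "ext Mv = (\<chi> i j. case (i, j) of (Some a, Some b) \<Rightarrow> Mv $ a $ b | (None, None) \<Rightarrow> 1 | _ \<Rightarrow> 0)"

lemma ext_mult: "ext Mv *v x = emb (Mv *v proj x) + (x $ None) *\<^sub>R vv"
  unfolding vec_eq_iff
proof
  fix i show "(ext Mv *v x) $ i = (emb (Mv *v proj x) + (x $ None) *\<^sub>R vv) $ i"
    by (cases i) (simp_all add: matrix_vector_mult_def ext_def sum_opt)
qed

lemma ext_emb: "ext Mv *v emb x = emb (Mv *v x)" by (simp add: ext_mult)
lemma ext_vv: "ext Mv *v vv = vv" by (simp add: ext_mult proj_vv emb_zero)

lemma aut_ext: assumes "aut G Mv" shows "aut (sum_gram G) (ext Mv)"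
  unfolding aut_def
proof (intro conjI allI)
  show "(\<lambda>x. ext Mv *v x) ` latt = latt"
  proof
    show "(\<lambda>x. ext Mv *v x) ` latt \<subseteq> latt"
    proof
      fix y assume "y \<in> (\<lambda>x. ext Mv *v x) ` latt"
      then obtain x where x: "x \<in> latt" "y = ext Mv *v x" by blast
      have "Mv *v proj x \<in> latt" using x(1) aut_latt[OF assms] by (simp add: latt_sum_iff)
      thus "y \<in> latt" using x by (simp add: ext_mult latt_sum_iff proj_add proj_scale proj_vv)
    qed
    show "latt \<subseteq> (\<lambda>x. ext Mv *v x) ` latt"
    proof
      fix y :: "real^('a option)" assume y: "y \<in> latt"
      hence "proj y \<in> latt" by (simp add: latt_sum_iff)
      then obtain z where z: "z \<in> latt" "proj y = Mv *v z" using assms unfolding aut_def by blast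
      define x where "x = emb z + (y $ None) *\<^sub>R vv"
      have "x \<in> latt" using z(1) y by (simp add: x_def latt_sum_iff proj_add proj_scale proj_vv)
      moreover have "ext Mv *v x = y"
        by (subst decomp[of y]) (simp add: x_def ext_mult proj_add proj_scale proj_vv z(2))
      ultimately show "y \<in> (\<lambda>x. ext Mv *v x) ` latt" by force
    qed
  qed
  fix x y :: "real^('a option)"
  show "bf (sum_gram G) (ext Mv *v x) (ext Mv *v y) = bf (sum_gram G) x y"
    by (simp add: bf_sg ext_mult proj_add proj_scale proj_vv aut_bf[OF assms])
qed

lemma neg_mult: "(- (M::real^'n^'m)) *v x = - (M *v x)"
  unfolding vec_eq_iff matrix_vector_mult_def
proof
  fix i show "(\<chi> i. \<Sum>j\<in>UNIV. (- M) $ i $ j * x $ j) $ i = (- (\<chi> i. \<Sum>j\<in>UNIV. M $ i $ j * x $ j)) $ i"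
    by simp (subst sum_negf[symmetric], simp)
qed

lemma aut_neg: fixes G :: "real^'m^'m" assumes "aut G M" shows "aut G (- M)"
  unfolding aut_def
proof (intro conjI allI)
  show "(\<lambda>x. (- M) *v x) ` latt = latt"
  proof
    show "(\<lambda>x. (- M) *v x) ` latt \<subseteq> latt"
      using aut_latt[OF assms] latt_neg by (auto simp: neg_mult)
    show "latt \<subseteq> (\<lambda>x. (- M) *v x) ` latt"
    proof
      fix y :: "real^'m" assume "y \<in> latt"
      hence "- y \<in> latt" by (rule latt_neg)
      then obtain z where "z \<in> latt" "- y = M *v z" using assms unfolding aut_def by blast
      hence "y = - (M *v z)" by (metis minus_minus)
      hence "y = (- M) *v z" by (simp add: neg_mult)
      thus "y \<in> (\<lambda>x. (- M) *v x) ` latt" using \<open>z \<in> latt\<close> by blast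
    qed
  qed
  fix x y :: "real^'m" show "bf G ((- M) *v x) ((- M) *v y) = bf G x y"
    by (simp add: neg_mult bf_neg_left bf_neg_right aut_bf[OF assms])
qed

section \<open>Discriminant\<close>

lemma three_eq: "(3::real) *\<^sub>R (x::real^'m) = x + 2 *\<^sub>R x"
  by (simp add: vec_eq_iff)

lemma disc3_scale:
  fixes G :: "real^'m^'m"
  assumes "x \<in> disc3 G" "c \<in> \<int>" shows "c *\<^sub>R x \<in> disc3 G"
proof -
  have "x \<in> dual G" "3 *\<^sub>R x \<in> latt" using assms(1) by (auto simp: disc3_def)
  hence "c *\<^sub>R x \<in> dual G" using assms(2) by (auto simp: dual_def bf_scale_left Ints_mult)
  moreover have "3 *\<^sub>R (c *\<^sub>R x) = c *\<^sub>R (3 *\<^sub>R x)" by simp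
  hence "3 *\<^sub>R (c *\<^sub>R x) \<in> latt" using latt_scale[OF assms(2) \<open>3 *\<^sub>R x \<in> latt\<close>] by (simp add: mult.commute)
  ultimately show ?thesis by (simp add: disc3_def)
qed

lemma disc3_zero: "(0::real^'m) \<in> disc3 G"
  by (simp add: disc3_def dual_def latt_zero)

lemma aut_disc3:
  fixes G :: "real^'m^'m"
  assumes "aut G M" "x \<in> disc3 G" shows "M *v x \<in> disc3 G"
proof -
  have x: "x \<in> dual G" "3 *\<^sub>R x \<in> latt" using assms(2) by (auto simp: disc3_def)
  have "M *v x \<in> dual G" unfolding dual_def
  proof (intro CollectI ballI)
    fix y :: "real^'m" assume "y \<in> latt"
    then obtain z where "z \<in> latt" "y = M *v z" using assms(1) unfolding aut_def by blast
    thus "bf G (M *v x) y \<in> \<int>" using x(1) aut_bf[OF assms(1)] by (simp add: dual_def)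
  qed
  moreover have "3 *\<^sub>R (M *v x) \<in> latt"
    using aut_latt[OF assms(1) x(2)] by (simp add: matrix_vector_mult_scaleR)
  ultimately show ?thesis by (simp add: disc3_def)
qed

lemma class_mem: "b \<in> latt_cong D `` {a} \<longleftrightarrow> a \<in> D \<and> b \<in> D \<and> a - b \<in> latt"
  by (simp add: latt_cong_def)

lemma exists_nonlatt:
  fixes D :: "(real^'m) set"
  assumes "card (D // latt_cong D) = 3"
  shows "\<exists>x\<in>D. x \<notin> latt"
proof (rule ccontr)
  assume "\<not> ?thesis"
  hence DL: "D \<subseteq> latt" by blast
  have "D // latt_cong D \<subseteq> {D}"
  proof
    fix C assume "C \<in> D // latt_cong D"
    then obtain a where a: "a \<in> D" "C = latt_cong D `` {a}" by (auto simp: quotient_def)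
    have "C = D"
    proof
      show "C \<subseteq> D" using a by (auto simp: latt_cong_def)
      show "D \<subseteq> C" using a DL by (auto simp: latt_cong_def intro: latt_diff)
    qed
    thus "C \<in> {D}" by simp
  qed
  hence "card (D // latt_cong D) \<le> card {D}" by (intro card_mono) auto
  thus False using assms by simp
qed

lemma order3:
  fixes D :: "(real^'m) set"
  assumes card: "card (D // latt_cong D) = 3" and x: "x \<in> D" "x \<notin> latt"
    and D0: "0 \<in> D" and D2: "2 *\<^sub>R x \<in> D" and x3: "3 *\<^sub>R x \<in> latt" and y: "y \<in> D"
  shows "y \<in> latt \<or> y - x \<in> latt \<or> y - 2 *\<^sub>R x \<in> latt"
proof -
  let ?R = "latt_cong D"
  define C0 where "C0 = ?R `` {0}"
  define C1 where "C1 = ?R `` {x}"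
  define C2 where "C2 = ?R `` {2 *\<^sub>R x}"
  have in0: "C0 \<in> D // ?R" using D0 by (simp add: C0_def quotientI)
  have in1: "C1 \<in> D // ?R" using x by (simp add: C1_def quotientI)
  have in2: "C2 \<in> D // ?R" using D2 by (simp add: C2_def quotientI)
  have xC1: "x \<in> C1" using x by (simp add: C1_def latt_cong_def latt_zero)
  have x2C2: "2 *\<^sub>R x \<in> C2" using D2 by (simp add: C2_def latt_cong_def latt_zero)
  have "C0 \<noteq> C1"
  proof
    assume "C0 = C1" hence "x \<in> C0" using xC1 by simp
    hence "0 - x \<in> latt" by (simp add: C0_def latt_cong_def)
    hence "- (0 - x) \<in> latt" by (rule latt_neg)
    thus False using x by simp
  qed
  moreover have "C1 \<noteq> C2"
  proof
    assume "C1 = C2" hence "2 *\<^sub>R x \<in> C1" using x2C2 by simp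
    hence "x - 2 *\<^sub>R x \<in> latt" by (simp add: C1_def latt_cong_def)
    hence "- (x - 2 *\<^sub>R x) \<in> latt" by (rule latt_neg)
    moreover have "- (x - 2 *\<^sub>R x) = x" by (simp add: algebra_simps scaleR_2)
    ultimately show False using x by simp
  qed
  moreover have "C0 \<noteq> C2"
  proof
    assume "C0 = C2" hence "2 *\<^sub>R x \<in> C0" using x2C2 by simp
    hence "0 - 2 *\<^sub>R x \<in> latt" by (simp add: C0_def latt_cong_def)
    hence "- (0 - 2 *\<^sub>R x) \<in> latt" by (rule latt_neg)
    hence "3 *\<^sub>R x - (- (0 - 2 *\<^sub>R x)) \<in> latt" using x3 by (intro latt_diff)
    moreover have "3 *\<^sub>R x - (- (0 - 2 *\<^sub>R x)) = x" by (simp add: three_eq)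
    ultimately show False using x by simp
  qed
  ultimately have c3: "card {C0, C1, C2} = 3" by simp
  have fin: "finite (D // ?R)" using card by (intro card_ge_0_finite) simp
  have "{C0, C1, C2} = D // ?R"
    by (rule card_subset_eq[OF fin]) (use in0 in1 in2 c3 card in auto)
  moreover have "?R `` {y} \<in> D // ?R" using y by (rule quotientI)
  ultimately have "?R `` {y} \<in> {C0, C1, C2}" by simp
  moreover have "y \<in> ?R `` {y}" using y by (simp add: latt_cong_def latt_zero)
  ultimately have "y \<in> C0 \<or> y \<in> C1 \<or> y \<in> C2" by auto
  moreover have "y \<in> C0 \<Longrightarrow> y \<in> latt"
  proof -
    assume "y \<in> C0" hence "0 - y \<in> latt" by (simp add: C0_def latt_cong_def)
    hence "- (0 - y) \<in> latt" by (rule latt_neg)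
    thus "y \<in> latt" by simp
  qed
  moreover have "y \<in> C1 \<Longrightarrow> y - x \<in> latt"
  proof -
    assume "y \<in> C1" hence "x - y \<in> latt" by (simp add: C1_def latt_cong_def)
    hence "- (x - y) \<in> latt" by (rule latt_neg)
    thus "y - x \<in> latt" by simp
  qed
  moreover have "y \<in> C2 \<Longrightarrow> y - 2 *\<^sub>R x \<in> latt"
  proof -
    assume "y \<in> C2" hence "2 *\<^sub>R x - y \<in> latt" by (simp add: C2_def latt_cong_def)
    hence "- (2 *\<^sub>R x - y) \<in> latt" by (rule latt_neg)
    thus "y - 2 *\<^sub>R x \<in> latt" by simp
  qed
  ultimately show ?thesis by blast
qed

lemma neg_z3_aux:
  fixes M :: "real^'m^'m"
  assumes "aut G M" "l \<in> latt" "k \<in> \<int>" "M *v x + x \<in> latt"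
  shows "(- M) *v (k *\<^sub>R x + l) - (k *\<^sub>R x + l) \<in> latt"
proof -
  have e: "(- M) *v (k *\<^sub>R x + l) - (k *\<^sub>R x + l) = - (k *\<^sub>R (M *v x + x)) - (M *v l + l)"
    by (simp add: neg_mult matrix_vector_right_distrib matrix_vector_mult_scaleR algebra_simps)
  have a: "k *\<^sub>R (M *v x + x) \<in> latt" using assms(3,4) by (rule latt_scale)
  have b: "M *v l + l \<in> latt" using aut_latt[OF assms(1,2)] assms(2) by (rule latt_add)
  show ?thesis unfolding e by (rule latt_diff[OF latt_neg[OF a] b])
qed

lemma z3_neg:
  fixes G :: "real^'m^'m"
  assumes card: "card (disc3 G // latt_cong (disc3 G)) = 3" and M: "aut G M"
    and nz: "\<not> z3_direct G M"
  shows "z3_direct G (- M)"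
proof -
  obtain x where x: "x \<in> disc3 G" "M *v x - x \<notin> latt" using nz unfolding z3_direct_def by blast
  have xl: "x \<notin> latt" using x(2) aut_latt[OF M] latt_diff by blast
  have D0: "0 \<in> disc3 G" by (rule disc3_zero)
  have D2: "2 *\<^sub>R x \<in> disc3 G" using x(1) by (rule disc3_scale) simp
  have x3: "3 *\<^sub>R x \<in> latt" using x(1) by (simp add: disc3_def)
  have Mx: "M *v x \<in> disc3 G" using M x(1) by (rule aut_disc3)
  have "M *v x \<in> latt \<or> M *v x - x \<in> latt \<or> M *v x - 2 *\<^sub>R x \<in> latt"
    by (rule order3[OF card x(1) xl D0 D2 x3 Mx])
  moreover have "M *v x \<notin> latt"
  proof
    assume "M *v x \<in> latt"
    obtain N where N: "aut G N" "\<And>x. N *v (M *v x) = x" using aut_inv[OF M] by metis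
    have "N *v (M *v x) \<in> latt" using aut_latt[OF N(1) \<open>M *v x \<in> latt\<close>] .
    thus False using xl N(2) by simp
  qed
  ultimately have m2: "M *v x - 2 *\<^sub>R x \<in> latt" using x(2) by blast
  have Mxx: "M *v x + x \<in> latt"
  proof -
    have e: "M *v x + x = (M *v x - 2 *\<^sub>R x) + 3 *\<^sub>R x" by (simp add: vec_eq_iff)
    show ?thesis unfolding e by (rule latt_add[OF m2 x3])
  qed
  show ?thesis unfolding z3_direct_def
  proof
    fix y assume y: "y \<in> disc3 G"
    have "y \<in> latt \<or> y - x \<in> latt \<or> y - 2 *\<^sub>R x \<in> latt"
      by (rule order3[OF card x(1) xl D0 D2 x3 y])
    then obtain k l where kl: "k \<in> \<int>" "l \<in> latt" "y = k *\<^sub>R x + l"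
    proof (elim disjE)
      assume "y \<in> latt" thus ?thesis using that[of 0 y] by simp
    next
      assume "y - x \<in> latt" thus ?thesis using that[of 1 "y - x"] by simp
    next
      assume "y - 2 *\<^sub>R x \<in> latt" thus ?thesis using that[of 2 "y - 2 *\<^sub>R x"] by simp
    qed
    show "(- M) *v y - y \<in> latt" unfolding kl(3) by (rule neg_z3_aux[OF M kl(2,1) Mxx])
  qed
qed

lemma emb_disc3: assumes "y \<in> disc3 G" shows "emb y \<in> disc3 (sum_gram G)"
proof -
  have y: "y \<in> dual G" "3 *\<^sub>R y \<in> latt" using assms by (auto simp: disc3_def)
  have "emb y \<in> dual (sum_gram G)" unfolding dual_def
  proof (intro CollectI ballI)
    fix z :: "real^('a option)" assume "z \<in> latt"
    hence "proj z \<in> latt" by (simp add: latt_sum_iff)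
    moreover have "bf (sum_gram G) (emb y) z = bf G y (proj z)" by (simp add: bf_sg)
    ultimately show "bf (sum_gram G) (emb y) z \<in> \<int>" using y(1) by (simp add: dual_def)
  qed
  moreover have "3 *\<^sub>R emb y \<in> latt" using y(2) by (simp add: emb_scale[symmetric] emb_latt)
  ultimately show ?thesis by (simp add: disc3_def)
qed

lemma z3_ext: assumes "\<not> z3_direct G Mv" shows "\<not> z3_direct (sum_gram G) (ext Mv)"
proof -
  obtain y where y: "y \<in> disc3 G" "Mv *v y - y \<notin> latt" using assms unfolding z3_direct_def by blast
  have "ext Mv *v emb y - emb y = emb (Mv *v y - y)" by (simp add: ext_emb emb_diff)
  hence "ext Mv *v emb y - emb y \<notin> latt" using y(2) by (simp add: emb_latt)
  thus ?thesis using emb_disc3[OF y(1)] unfolding z3_direct_def by blast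
qed

lemma exists_bad_G:
  assumes "card (disc3 (sum_gram G) // latt_cong (disc3 (sum_gram G))) = 3"
  shows "\<exists>x0\<in>disc3 G. 2 *\<^sub>R x0 \<notin> latt"
proof -
  obtain x where x: "x \<in> disc3 (sum_gram G)" "x \<notin> latt" using exists_nonlatt[OF assms] by blast
  have xd: "x \<in> dual (sum_gram G)" and x3: "3 *\<^sub>R x \<in> latt" using x(1) by (auto simp: disc3_def)
  have "bf (sum_gram G) x vv \<in> \<int>" using xd vv_latt unfolding dual_def by blast
  hence c2: "2 * x $ None \<in> \<int>" by (simp add: bf_sg_w_vv)
  have c3: "3 * x $ None \<in> \<int>" using x3 by (simp add: latt_iff)
  have "x $ None = 3 * x $ None - 2 * x $ None" by simp
  hence cI: "x $ None \<in> \<int>" using Ints_diff[OF c3 c2] by simp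
  define x0 where "x0 = proj x"
  have "x0 \<in> dual G" unfolding dual_def
  proof (intro CollectI ballI)
    fix y :: "real^'a" assume "y \<in> latt"
    hence "emb y \<in> latt" by (simp add: emb_latt)
    hence "bf (sum_gram G) x (emb y) \<in> \<int>" using xd unfolding dual_def by blast
    thus "bf G x0 y \<in> \<int>" by (simp add: x0_def bf_sg_w_emb)
  qed
  moreover have "3 *\<^sub>R x0 \<in> latt" using x3 by (simp add: x0_def proj_scale[symmetric] latt_sum_iff)
  ultimately have x0d: "x0 \<in> disc3 G" by (simp add: disc3_def)
  have "x0 \<notin> latt" using x(2) cI by (simp add: x0_def latt_sum_iff)
  moreover have "2 *\<^sub>R x0 \<in> latt \<Longrightarrow> x0 \<in> latt"
  proof -
    assume "2 *\<^sub>R x0 \<in> latt"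
    hence "3 *\<^sub>R x0 - 2 *\<^sub>R x0 \<in> latt" using \<open>3 *\<^sub>R x0 \<in> latt\<close> by (intro latt_diff)
    thus "x0 \<in> latt" by (simp add: three_eq)
  qed
  ultimately show ?thesis using x0d by blast
qed

lemma neg_not_z3:
  fixes G :: "real^'m^'m"
  assumes "z3_direct G M" "x0 \<in> disc3 G" "2 *\<^sub>R x0 \<notin> latt"
  shows "\<not> z3_direct G (- M)"
proof
  assume "z3_direct G (- M)"
  hence a: "(- M) *v x0 - x0 \<in> latt" using assms(2) unfolding z3_direct_def by blast
  have b: "M *v x0 - x0 \<in> latt" using assms(1,2) unfolding z3_direct_def by blast
  have e: "2 *\<^sub>R x0 = - ((- M) *v x0 - x0) - (M *v x0 - x0)" by (simp add: neg_mult scaleR_2)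
  have "- ((- M) *v x0 - x0) - (M *v x0 - x0) \<in> latt" by (rule latt_diff[OF latt_neg[OF a] b])
  thus False using assms(3) unfolding e by simp
qed

section \<open>Geometry of cells\<close>

lemma UU_sub: "UU H \<subseteq> negcone H" unfolding UU_def by blast

lemma open_UU:
  fixes H :: "real^'m^'m"
  assumes "transpose H = H" "lor H" shows "open (UU H)"
  unfolding open_contains_ball
proof
  fix x0 assume x0: "x0 \<in> UU H"
  hence q0: "bf H x0 x0 < 0" by (simp add: UU_def negcone_def)
  obtain r where r: "r > 0" "ball x0 r \<subseteq> negcone H"
    "\<And>w x. w \<in> V H 2 \<union> V H 6 \<Longrightarrow> x \<in> ball x0 r \<Longrightarrow> bf H w x = 0 \<Longrightarrow> bf H w x0 = 0"
    using LF2[OF assms q0] by blast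
  have "ball x0 r \<subseteq> UU H"
  proof
    fix x assume x: "x \<in> ball x0 r"
    have "x \<notin> mirrors H"
    proof
      assume "x \<in> mirrors H"
      then obtain w where w: "w \<in> V H 2 \<union> V H 6" "bf H w x = 0" unfolding mirrors_def by blast
      hence "bf H w x0 = 0" using r(3) x by blast
      hence "x0 \<in> mirrors H" using w(1) unfolding mirrors_def by blast
      thus False using x0 by (simp add: UU_def)
    qed
    thus "x \<in> UU H" using x r(2) by (auto simp: UU_def)
  qed
  thus "\<exists>e>0. ball x0 e \<subseteq> UU H" using r(1) by blast
qed

lemma GL:
  fixes U :: "(real^'m) set"
  assumes "open U" "K1 \<in> components U" "K2 \<in> components U" "x \<in> K2" "x \<in> closure K1"
  shows "K2 = K1"
proof -
  have "open K2" using open_components[OF assms(1,3)] .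
  have "K2 \<inter> closure K1 \<noteq> {}" using assms(4,5) by blast
  hence "K2 \<inter> K1 \<noteq> {}" using open_Int_closure_eq_empty[OF \<open>open K2\<close>] by blast
  thus ?thesis using components_eq[OF assms(3,2)] by blast
qed

lemma comp_eq: assumes "K \<in> components U" "p \<in> K" shows "K = connected_component_set U p"
proof -
  obtain x where x: "x \<in> U" "K = connected_component_set U x" using assms(1) components_iff by blast
  thus ?thesis using connected_component_eq[of p U x] assms(2) by simp
qed

lemma cont_mv: "continuous_on S (\<lambda>x. (M::real^'m^'k) *v x)"
  by (rule bounded_linear.continuous_on[OF matrix_vector_mul_bounded_linear continuous_on_id])

lemma neg_comp:
  fixes H :: "real^'m^'m"
  assumes "K \<in> components (UU H)" "p \<in> K"
  shows "uminus ` K = connected_component_set (UU H) (- p)" "uminus ` K \<in> components (UU H)"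
proof -
  have pU: "p \<in> UU H" using assms in_components_subset by blast
  show e: "uminus ` K = connected_component_set (UU H) (- p)"
    unfolding comp_eq[OF assms]
    by (rule comp_image[where g = uminus]) (auto simp: neg_UU pU intro: continuous_on_minus continuous_on_id)
  show "uminus ` K \<in> components (UU H)" unfolding e using pU by (intro componentsI) (simp add: neg_UU)
qed

lemma aut_comp:
  fixes H :: "real^'m^'m"
  assumes M: "aut H M" and "K \<in> components (UU H)" "p \<in> K"
  shows "(\<lambda>x. M *v x) ` K = connected_component_set (UU H) (M *v p)"
    "(\<lambda>x. M *v x) ` K \<in> components (UU H)"
proof -
  obtain N where N: "aut H N" "\<And>x. M *v (N *v x) = x" "\<And>x. N *v (M *v x) = x" using aut_inv[OF M] by metis
  have pU: "p \<in> UU H" using assms in_components_subset by blast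
  show e: "(\<lambda>x. M *v x) ` K = connected_component_set (UU H) (M *v p)"
    unfolding comp_eq[OF assms(2,3)]
    by (rule comp_image[where g = "\<lambda>x. N *v x"]) (auto simp: aut_UU[OF M] N pU intro: cont_mv)
  show "(\<lambda>x. M *v x) ` K \<in> components (UU H)" unfolding e using pU by (intro componentsI) (simp add: aut_UU[OF M])
qed

lemma lin_neg: "linear (uminus :: real^'m \<Rightarrow> real^'m)"
  by (rule linearI) auto

lemma neg_Q:
  fixes H :: "real^'m^'m"
  shows "uminus ` (closure K \<inter> negcone H) = closure (uminus ` K) \<inter> negcone H"
proof -
  have inj: "inj (uminus :: real^'m \<Rightarrow> real^'m)" by (rule injI) simp
  have "uminus ` negcone H = negcone H"
  proof
    show "uminus ` negcone H \<subseteq> negcone H" using neg_negcone by blast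
    show "negcone H \<subseteq> uminus ` negcone H"
    proof
      fix x assume "x \<in> negcone H"
      hence "- x \<in> negcone H" by (simp add: neg_negcone)
      thus "x \<in> uminus ` negcone H" by (metis image_eqI minus_minus)
    qed
  qed
  thus ?thesis using image_Int[OF inj] closure_injective_linear_image[OF lin_neg inj] by metis
qed

lemma aut_Q:
  fixes H :: "real^'m^'m"
  assumes M: "aut H M"
  shows "(\<lambda>x. M *v x) ` (closure K \<inter> negcone H) = closure ((\<lambda>x. M *v x) ` K) \<inter> negcone H"
proof -
  obtain N where N: "aut H N" "\<And>x. M *v (N *v x) = x" "\<And>x. N *v (M *v x) = x" using aut_inv[OF M] by metis
  have inj: "inj (\<lambda>x. M *v x)" by (rule injI) (metis N(3))
  have lin: "linear (\<lambda>x. M *v x)" by simp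
  have "(\<lambda>x. M *v x) ` negcone H = negcone H"
  proof
    show "(\<lambda>x. M *v x) ` negcone H \<subseteq> negcone H" using aut_negcone[OF M] by blast
    show "negcone H \<subseteq> (\<lambda>x. M *v x) ` negcone H"
    proof
      fix x assume "x \<in> negcone H"
      hence "N *v x \<in> negcone H" using aut_negcone[OF M, of "N *v x"] N(2) by simp
      thus "x \<in> (\<lambda>x. M *v x) ` negcone H" using N(2)[of x] by (metis image_eqI)
    qed
  qed
  thus ?thesis using image_Int[OF inj] closure_injective_linear_image[OF lin inj] by metis
qed

lemma lift_unique:
  fixes H :: "real^'m^'m"
  assumes sym: "transpose H = H" and L: "lor H"
    and K1: "K1 \<in> components (UU H)" and K2: "K2 \<in> components (UU H)"
    and sub: "closure K2 \<inter> negcone H \<subseteq> (closure K1 \<inter> negcone H) \<union> uminus ` (closure K1 \<inter> negcone H)"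
  shows "K2 = K1 \<or> K2 = uminus ` K1"
proof -
  have op: "open (UU H)" by (rule open_UU[OF sym L])
  obtain k where k: "k \<in> K2" using in_components_nonempty[OF K2] by blast
  have "k \<in> UU H" using k in_components_subset[OF K2] by blast
  hence "k \<in> closure K2 \<inter> negcone H" using k closure_subset UU_sub by blast
  hence "k \<in> closure K1 \<or> k \<in> closure (uminus ` K1)" using sub neg_Q[of K1 H] by blast
  moreover obtain k1 where k1: "k1 \<in> K1" using in_components_nonempty[OF K1] by blast
  ultimately show ?thesis
    using GL[OF op K1 K2 k] GL[OF op neg_comp(2)[OF K1 k1] K2 k] by blast
qed

lemma Q_not_sym:
  fixes H :: "real^'m^'m"
  assumes sym: "transpose H = H" and L: "lor H" and K: "K \<in> components (UU H)"
  shows "uminus ` (closure K \<inter> negcone H) \<noteq> closure K \<inter> negcone H"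
proof
  assume eq: "uminus ` (closure K \<inter> negcone H) = closure K \<inter> negcone H"
  obtain k where k: "k \<in> K" using in_components_nonempty[OF K] by blast
  have kU: "k \<in> UU H" using k in_components_subset[OF K] by blast
  hence qk: "bf H k k < 0" using UU_sub by (auto simp: negcone_def)
  define a where "a = H *v k"
  have la: "inner a x = bf H x k" for x by (simp add: a_def bf_def inner_commute)
  have nz: "bf H x k \<noteq> 0" if x: "x \<in> negcone H" for x
  proof
    assume x0: "bf H x k = 0"
    have "x \<noteq> 0" using x by (auto simp: negcone_def)
    hence "bf H x x > 0" using L qk x0 unfolding lor_def by blast
    thus False using x by (simp add: negcone_def)
  qed
  have neg: "bf H x k < 0" if x: "x \<in> K" for x
  proof (rule ccontr)
    assume "\<not> bf H x k < 0"
    hence "inner a k \<le> 0" "0 \<le> inner a x" using la qk by auto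
    then obtain z where z: "z \<in> K" "inner a z = 0"
      using connected_ivt_hyperplane[OF in_components_connected[OF K] k x] by blast
    have "z \<in> negcone H" using z(1) in_components_subset[OF K] UU_sub by blast
    thus False using nz z(2) la by simp
  qed
  have cl: "closure K \<subseteq> {x. inner a x \<le> 0}"
  proof (rule closure_minimal)
    show "K \<subseteq> {x. inner a x \<le> 0}" using neg la by (auto intro: less_imp_le)
    show "closed {x. inner a x \<le> 0}" by (rule closed_halfspace_le)
  qed
  have "k \<in> closure K \<inter> negcone H" using k kU closure_subset UU_sub by blast
  hence "- k \<in> uminus ` (closure K \<inter> negcone H)" by (rule imageI)
  hence "- k \<in> closure K" using eq by blast
  hence "inner a (- k) \<le> 0" using cl by blast
  moreover have "inner a (- k) = - bf H k k" using la[of "- k"] by (simp add: bf_neg_left)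
  ultimately show False using qk by simp
qed

lemma norm_vv: "norm (vv :: real^('n::finite option)) = 1"
  by (simp add: norm_vec_def L2_set_def sum_opt)

lemma None_inner: "x $ None = inner vv x"
  by (simp add: inner_vec_def sum_opt)

lemma pt_ball:
  assumes "0 < t" "t < r"
  shows "emb y + t *\<^sub>R vv \<in> ball (emb y) r" "(emb y + t *\<^sub>R vv) $ None = t"
proof -
  have "dist (emb y) (emb y + t *\<^sub>R vv) = t" using assms(1) by (simp add: dist_norm norm_vv)
  thus "emb y + t *\<^sub>R vv \<in> ball (emb y) r" using assms(2) by simp
  show "(emb y + t *\<^sub>R vv) $ None = t" by simp
qed

lemma mv_neg: "(M::real^'m^'k) *v (- x) = - (M *v x)"
  using matrix_vector_mult_scaleR[of M "-1" x] by simp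

lemma negM_image: "(\<lambda>x. (- (M::real^'m^'k)) *v x) ` A = uminus ` ((\<lambda>x. M *v x) ` A)"
  by (simp add: neg_mult image_image)

lemma M_neg_image: "(\<lambda>x. (M::real^'m^'k) *v x) ` (uminus ` A) = uminus ` ((\<lambda>x. M *v x) ` A)"
  by (simp add: mv_neg image_image)

lemma neg_neg_image: "uminus ` uminus ` (A :: (real^'m) set) = A"
  by (simp add: image_image)

lemma int_sq_ge1: "(ci::int) \<noteq> 0 \<Longrightarrow> 1 \<le> ci * ci"
proof (cases "ci > 0")
  case True thus ?thesis using mult_mono[of 1 ci 1 ci] by simp
next
  case False
  assume "ci \<noteq> 0" hence "-ci \<ge> 1" using False by simp
  hence "1 * 1 \<le> (-ci) * (-ci)" by (intro mult_mono) auto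
  thus ?thesis by simp
qed

lemma int_sq_ge4: "(ci::int) \<ge> 2 \<or> ci \<le> -2 \<Longrightarrow> 4 \<le> ci * ci"
proof (elim disjE)
  assume "ci \<ge> 2" hence "2 * 2 \<le> ci * ci" by (intro mult_mono) auto
  thus ?thesis by simp
next
  assume "ci \<le> -2" hence "2 * 2 \<le> (-ci) * (-ci)" by (intro mult_mono) auto
  thus ?thesis by simp
qed

lemma KL:
  fixes G :: "real^'n^'n"
  assumes symS: "transpose (sum_gram G) = sum_gram G" and LS: "lor (sum_gram G)" and y0: "y0 \<in> UU G"
  obtains r where "r > 0" "ball (emb y0) r \<subseteq> negcone (sum_gram G)"
     "\<And>x. x \<in> ball (emb y0) r \<Longrightarrow> x \<in> mirrors (sum_gram G) \<Longrightarrow> x $ None = 0"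
proof -
  let ?S = "sum_gram G"
  have LG: "lor G" by (rule lor_G[OF LS])
  have q0: "bf G y0 y0 < 0" and y0m: "y0 \<notin> mirrors G" using y0 by (auto simp: UU_def negcone_def)
  have q0S: "bf ?S (emb y0) (emb y0) < 0" using q0 by (simp add: bf_sg_emb)
  obtain r where r: "r > 0" "ball (emb y0) r \<subseteq> negcone ?S"
    "\<And>w x. w \<in> V ?S 2 \<union> V ?S 6 \<Longrightarrow> x \<in> ball (emb y0) r \<Longrightarrow> bf ?S w x = 0 \<Longrightarrow> bf ?S w (emb y0) = 0"
    using LF2[OF symS LS q0S] by blast
  have key: "x $ None = 0" if x: "x \<in> ball (emb y0) r" "x \<in> mirrors ?S" for x
  proof -
    obtain w where w: "w \<in> V ?S 2 \<union> V ?S 6" "bf ?S w x = 0" using x(2) unfolding mirrors_def by blast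
    obtain k where k: "k = 2 \<or> k = 6" "w \<in> latt" "bf ?S w w = k" "\<forall>z\<in>latt. 2 * bf ?S w z / k \<in> \<int>"
      using w(1) unfolding V_def by blast
    define u where "u = proj w"
    define c where "c = w $ None"
    have wy: "bf G u y0 = 0" using r(3)[OF w(1) x(1) w(2)] by (simp add: bf_sg_w_emb u_def)
    have wdec: "w = emb u + c *\<^sub>R vv" using decomp[of w] by (simp add: u_def c_def)
    have cI: "c \<in> \<int>" using k(2) by (simp add: c_def latt_iff)
    have qw: "bf ?S w w = bf G u u + 2 * c * c" by (simp add: bf_sg u_def c_def)
    show ?thesis
    proof (cases "u = 0")
      case True
      have "w \<noteq> 0" using k(1,3) by auto
      hence "c \<noteq> 0" using wdec True by (auto simp: emb_zero)
      moreover have "bf ?S w x = 2 * c * x $ None" using True by (simp add: bf_sg u_def c_def)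
      ultimately show ?thesis using w(2) by simp
    next
      case False
      have qu: "bf G u u > 0" using LG q0 wy False unfolding lor_def by blast
      show ?thesis
      proof (cases "c = 0")
        case True
        have "u \<in> V G k"
        proof -
          have "u \<in> latt" using k(2) by (simp add: u_def latt_sum_iff)
          moreover have "bf G u u = k" using qw k(3) True by simp
          moreover have "\<forall>z\<in>latt. 2 * bf G u z / k \<in> \<int>"
          proof
            fix z :: "real^'n" assume "z \<in> latt"
            hence "emb z \<in> latt" by (simp add: emb_latt)
            hence "2 * bf ?S w (emb z) / k \<in> \<int>" using k(4) by blast
            thus "2 * bf G u z / k \<in> \<int>" by (simp add: bf_sg_w_emb u_def)
          qed
          ultimately show ?thesis by (simp add: V_def)
        qed
        hence "u \<in> V G 2 \<union> V G 6" using k(1) by blast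
        hence "y0 \<in> mirrors G" using wy unfolding mirrors_def by blast
        thus ?thesis using y0m by simp
      next
        case False
        obtain ci where ci: "c = of_int ci" using cI Ints_cases by blast
        have ci0: "ci \<noteq> 0" using False ci by simp
        have "False"
        proof (cases "k = 2")
          case True
          have "1 \<le> ci * ci" by (rule int_sq_ge1[OF ci0])
          hence "(1::real) \<le> of_int (ci * ci)" by (metis of_int_1 of_int_le_iff)
          hence "1 \<le> c * c" by (simp add: ci)
          thus False using qu qw k(3) True by simp
        next
          case False
          hence k6: "k = 6" using k(1) by simp
          have "2 * bf ?S w vv / k \<in> \<int>" using k(4) vv_latt by blast
          hence "2 * (2 * c) / 6 \<in> \<int>" using k6 by (simp add: bf_sg_w_vv c_def)
          then obtain mi where mi: "2 * (2 * c) / 6 = of_int mi" using Ints_cases by blast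
          have "real_of_int (2 * ci) = real_of_int (3 * mi)" using mi ci by (simp add: field_simps)
          hence "2 * ci = 3 * mi" by (simp only: of_int_eq_iff)
          hence "ci \<ge> 2 \<or> ci \<le> -2" using ci0 by presburger
          hence "4 \<le> ci * ci" by (rule int_sq_ge4)
          hence "(4::real) \<le> of_int (ci * ci)" by (metis of_int_numeral of_int_le_iff)
          hence "4 \<le> c * c" by (simp add: ci)
          thus False using qu qw k(3) k6 by simp
        qed
        thus ?thesis ..
      qed
    qed
  qed
  show ?thesis using that r(1,2) key by blast
qed

lemma second:
  fixes G :: "real^'n^'n"
  assumes symS: "transpose (sum_gram G) = sum_gram G" and LS: "lor (sum_gram G)"
    and autv: "aut G Mv" and dirv: "cell_direct G Mv Pv"
  shows "\<exists>P. cell (sum_gram G) P \<and> preserves (ext Mv) P \<and> cell_direct (sum_gram G) (ext Mv) P"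
proof -
  let ?S = "sum_gram G"
  let ?M = "ext Mv"
  have symG: "transpose G = G" by (rule sg_sym[OF symS])
  have LG: "lor G" by (rule lor_G[OF LS])
  have opG: "open (UU G)" by (rule open_UU[OF symG LG])
  have autS: "aut ?S ?M" by (rule aut_ext[OF autv])
  obtain Qv where Qv: "cell_lift G Pv Qv" "(\<lambda>x. Mv *v x) ` Qv = Qv" using dirv unfolding cell_direct_def by blast
  obtain Kv where Kv: "Kv \<in> components (UU G)" "Qv = closure Kv \<inter> negcone G"
    using Qv(1) unfolding cell_lift_def half_cell_def UU_def by blast
  obtain y0 where y0: "y0 \<in> Kv" using in_components_nonempty[OF Kv(1)] by blast
  have y0U: "y0 \<in> UU G" using y0 in_components_subset[OF Kv(1)] by blast
  have My0: "Mv *v y0 \<in> Kv"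
  proof -
    let ?K' = "(\<lambda>x. Mv *v x) ` Kv"
    have K'c: "?K' \<in> components (UU G)" by (rule aut_comp(2)[OF autv Kv(1) y0])
    have m: "Mv *v y0 \<in> ?K'" using y0 by blast
    moreover have "?K' \<subseteq> closure ?K' \<inter> negcone G"
      using closure_subset in_components_subset[OF K'c] UU_sub by blast
    moreover have "closure ?K' \<inter> negcone G = Qv" using aut_Q[OF autv, of Kv] Kv(2) Qv(2) by simp
    ultimately have "Mv *v y0 \<in> closure Kv" using Kv(2) by blast
    hence "?K' = Kv" using GL[OF opG Kv(1) K'c m] by blast
    thus ?thesis using m by simp
  qed
  obtain r0 where r0: "r0 > 0" "ball (emb y0) r0 \<subseteq> negcone ?S"
    "\<And>x. x \<in> ball (emb y0) r0 \<Longrightarrow> x \<in> mirrors ?S \<Longrightarrow> x $ None = 0"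
    using KL[OF symS LS y0U] by blast
  have Hsub: "ball (emb y) r \<inter> {x. x $ None > 0} \<subseteq> UU ?S"
    if "ball (emb y) r \<subseteq> negcone ?S" "\<And>x. x \<in> ball (emb y) r \<Longrightarrow> x \<in> mirrors ?S \<Longrightarrow> x $ None = 0" for y r
    using that by (fastforce simp: UU_def)
  have Hconn: "connected (ball (emb y) r \<inter> {x. x $ None > 0})" for y r
  proof -
    have e: "{x. x $ None > 0} = {x. inner vv x > (0::real)}" by (simp add: None_inner)
    have "convex (ball (emb y) r \<inter> {x. x $ None > (0::real)})"
      unfolding e by (intro convex_Int convex_ball convex_halfspace_gt)
    thus ?thesis by (rule convex_connected)
  qed
  define p0 where "p0 = emb y0 + (r0/2) *\<^sub>R vv"
  have p0: "p0 \<in> ball (emb y0) r0" "p0 $ None = r0/2" using pt_ball[of "r0/2" r0 y0] r0(1) by (auto simp: p0_def)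
  have H0U: "ball (emb y0) r0 \<inter> {x. x $ None > 0} \<subseteq> UU ?S" by (rule Hsub[OF r0(2,3)])
  have p0U: "p0 \<in> UU ?S" using p0 r0(1) H0U by auto
  define K where "K = connected_component_set (UU ?S) p0"
  have Kc: "K \<in> components (UU ?S)" unfolding K_def using p0U by (rule componentsI)
  have H0K: "ball (emb y0) r0 \<inter> {x. x $ None > 0} \<subseteq> K"
    unfolding K_def by (rule connected_component_maximal[OF _ Hconn H0U]) (use p0 r0(1) in auto)
  define Gm where "Gm y \<longleftrightarrow> (\<exists>r>0. \<forall>x\<in>ball (emb y) r. x $ None > 0 \<longrightarrow> x \<in> K)" for y
  have loc: "\<exists>e>0. \<forall>y'\<in>UU G. dist y y' < e \<longrightarrow> (Gm y' \<longleftrightarrow> Gm y)" if y: "y \<in> UU G" for y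
  proof -
    obtain r where r: "r > 0" "ball (emb y) r \<subseteq> negcone ?S"
      "\<And>x. x \<in> ball (emb y) r \<Longrightarrow> x \<in> mirrors ?S \<Longrightarrow> x $ None = 0"
      using KL[OF symS LS y] by blast
    define Hy where "Hy = ball (emb y) r \<inter> {x. x $ None > 0}"
    have HU: "Hy \<subseteq> UU ?S" unfolding Hy_def by (rule Hsub[OF r(2,3)])
    have Hc: "connected Hy" unfolding Hy_def by (rule Hconn)
    have dich: "Hy \<subseteq> K \<or> Hy \<inter> K = {}"
    proof (rule disjCI)
      assume "Hy \<inter> K \<noteq> {}"
      then obtain z where z: "z \<in> Hy" "z \<in> K" by blast
      have "K = connected_component_set (UU ?S) z" using comp_eq[OF Kc z(2)] .
      thus "Hy \<subseteq> K" using connected_component_maximal[OF z(1) Hc HU] by simp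
    qed
    have sub: "ball (emb y') (r/2) \<subseteq> ball (emb y) r" if "dist y y' < r/2" for y'
    proof
      fix x assume "x \<in> ball (emb y') (r/2)"
      hence "dist (emb y') x < r/2" by simp
      moreover have "dist (emb y) (emb y') = dist y y'" by (simp add: dist_norm emb_diff[symmetric] norm_emb)
      ultimately have "dist (emb y) x < r" using that dist_triangle[of "emb y" x "emb y'"] by linarith
      thus "x \<in> ball (emb y) r" by simp
    qed
    have notGm: "\<not> Gm z" if "Hy \<inter> K = {}" "ball (emb z) s \<subseteq> ball (emb y) r" "s > 0" for z s
    proof
      assume "Gm z"
      then obtain r' where r': "r' > 0" "\<And>x. x \<in> ball (emb z) r' \<Longrightarrow> x $ None > 0 \<Longrightarrow> x \<in> K"
        unfolding Gm_def by blast
      define t where "t = min s r' / 2"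
      have t: "0 < t" "t < s" "t < r'" using r'(1) \<open>s > 0\<close> by (auto simp: t_def)
      have pt: "emb z + t *\<^sub>R vv \<in> ball (emb z) s" "emb z + t *\<^sub>R vv \<in> ball (emb z) r'"
        "(emb z + t *\<^sub>R vv) $ None = t"
        using pt_ball[OF t(1) t(2)] pt_ball[OF t(1) t(3)] by auto
      have "emb z + t *\<^sub>R vv \<in> K" using r'(2)[OF pt(2)] pt(3) t(1) by simp
      moreover have "emb z + t *\<^sub>R vv \<in> Hy" using pt(1,3) t(1) that(2) by (auto simp: Hy_def)
      ultimately show False using that(1) by blast
    qed
    show ?thesis
    proof (intro exI[of _ "r/2"] conjI ballI impI)
      show "r/2 > 0" using r(1) by simp
      fix y' assume y': "y' \<in> UU G" "dist y y' < r/2"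
      show "Gm y' \<longleftrightarrow> Gm y"
      proof (cases "Hy \<subseteq> K")
        case True
        have "Gm y" unfolding Gm_def using r(1) True by (intro exI[of _ r]) (auto simp: Hy_def)
        moreover have "Gm y'" unfolding Gm_def using r(1) True sub[OF y'(2)]
          by (intro exI[of _ "r/2"]) (auto simp: Hy_def)
        ultimately show ?thesis by simp
      next
        case False
        hence dis: "Hy \<inter> K = {}" using dich by blast
        have "\<not> Gm y" by (rule notGm[OF dis _ r(1)]) simp
        moreover have "\<not> Gm y'" by (rule notGm[OF dis sub[OF y'(2)]]) (use r(1) in simp)
        ultimately show ?thesis by simp
      qed
    qed
  qed
  have Gy0: "Gm y0" unfolding Gm_def using r0(1) H0K by blast
  have "Gm (Mv *v y0)"
  proof (rule connected_induction_simple[where P = Gm, OF in_components_connected[OF Kv(1)] y0 My0 Gy0])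
    fix a assume a: "a \<in> Kv"
    hence aU: "a \<in> UU G" using in_components_subset[OF Kv(1)] by blast
    obtain e where e: "e > 0" "\<forall>y'\<in>UU G. dist a y' < e \<longrightarrow> (Gm y' \<longleftrightarrow> Gm a)" using loc[OF aU] by blast
    show "\<exists>T. openin (top_of_set Kv) T \<and> a \<in> T \<and> (\<forall>x\<in>T. \<forall>y\<in>T. Gm x \<longrightarrow> Gm y)"
    proof (intro exI[of _ "Kv \<inter> ball a e"] conjI)
      show "openin (top_of_set Kv) (Kv \<inter> ball a e)" by (rule openin_open_Int) simp
      show "a \<in> Kv \<inter> ball a e" using a e(1) by simp
      show "\<forall>x\<in>Kv \<inter> ball a e. \<forall>y\<in>Kv \<inter> ball a e. Gm x \<longrightarrow> Gm y"
      proof (intro ballI impI)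
        fix x z assume xz: "x \<in> Kv \<inter> ball a e" "z \<in> Kv \<inter> ball a e" "Gm x"
        have "x \<in> UU G" "z \<in> UU G" using xz(1,2) in_components_subset[OF Kv(1)] by blast+
        moreover have "dist a x < e" "dist a z < e" using xz(1,2) by auto
        ultimately have "Gm x \<longleftrightarrow> Gm a" "Gm z \<longleftrightarrow> Gm a" using e(2) by blast+
        thus "Gm z" using xz(3) by simp
      qed
    qed
  qed
  then obtain r1 where r1: "r1 > 0" "\<And>x. x \<in> ball (emb (Mv *v y0)) r1 \<Longrightarrow> x $ None > 0 \<Longrightarrow> x \<in> K"
    unfolding Gm_def by blast
  define t where "t = min r0 r1 / 2"
  have t: "0 < t" "t < r0" "t < r1" using r0(1) r1(1) by (auto simp: t_def)
  define q where "q = emb y0 + t *\<^sub>R vv"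
  have qK: "q \<in> K" using pt_ball[OF t(1) t(2), of y0] t(1) H0K by (auto simp: q_def)
  have Mq: "?M *v q = emb (Mv *v y0) + t *\<^sub>R vv"
    by (simp add: q_def matrix_vector_right_distrib matrix_vector_mult_scaleR ext_emb ext_vv)
  have MqK: "?M *v q \<in> K" unfolding Mq using pt_ball[OF t(1) t(3), of "Mv *v y0"] t(1) r1(2) by auto
  have MK: "(\<lambda>x. ?M *v x) ` K = K"
  proof -
    have "(\<lambda>x. ?M *v x) ` K = connected_component_set (UU ?S) (?M *v q)" by (rule aut_comp(1)[OF autS Kc qK])
    also have "\<dots> = K" unfolding K_def by (rule connected_component_eq) (use MqK K_def in simp)
    finally show ?thesis .
  qed
  define Q where "Q = closure K \<inter> negcone ?S"
  define P where "P = Q \<union> uminus ` Q"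
  have lift: "cell_lift ?S P Q" unfolding cell_lift_def half_cell_def P_def Q_def
    using Kc unfolding UU_def by blast
  have MQ: "(\<lambda>x. ?M *v x) ` Q = Q" unfolding Q_def by (simp add: aut_Q[OF autS] MK)
  have "preserves ?M P" unfolding preserves_def P_def
    by (simp add: image_Un M_neg_image MQ)
  moreover have "cell ?S P" unfolding cell_def using lift by blast
  moreover have "cell_direct ?S ?M P" unfolding cell_direct_def using lift MQ by blast
  ultimately show ?thesis by blast
qed

theorem lemma7p7p1:
  fixes G :: "real^'n^'n"
  assumes "good_lattice (sum_gram G)"
  shows "(achiral G \<longrightarrow> achiral (sum_gram G)) \<and>
    (\<forall>Pv Mv. cell G Pv \<and> aut G Mv \<and> preserves Mv Pv \<and> cell_direct G Mv Pv \<and>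
       \<not> z3_direct G Mv \<longrightarrow>
       (\<exists>M. aut (sum_gram G) M \<and> (\<forall>x. M *v emb x = emb (Mv *v x)) \<and>
          \<not> z3_direct (sum_gram G) M \<and>
          (\<exists>P. cell (sum_gram G) P \<and> preserves M P \<and> cell_direct (sum_gram G) M P)))"
proof -
  let ?S = "sum_gram G"
  have intS: "integral_gram ?S" and hypS: "hyperbolic_sig ?S" and discS: "disc_ok ?S"
    using assms unfolding good_lattice_def by auto
  have symS: "transpose ?S = ?S" using intS unfolding integral_gram_def by blast
  have LS: "lor ?S" by (rule hyp_lor[OF symS hypS])
  have symG: "transpose G = G" by (rule sg_sym[OF symS])
  have LG: "lor G" by (rule lor_G[OF LS])
  have card: "card (disc3 ?S // latt_cong (disc3 ?S)) = 3" using discS unfolding disc_ok_def by blast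
  have C2: "\<forall>Pv Mv. cell G Pv \<and> aut G Mv \<and> preserves Mv Pv \<and> cell_direct G Mv Pv \<and>
       \<not> z3_direct G Mv \<longrightarrow>
       (\<exists>M. aut ?S M \<and> (\<forall>x. M *v emb x = emb (Mv *v x)) \<and>
          \<not> z3_direct ?S M \<and>
          (\<exists>P. cell ?S P \<and> preserves M P \<and> cell_direct ?S M P))"
  proof (intro allI impI)
    fix Pv Mv assume h: "cell G Pv \<and> aut G Mv \<and> preserves Mv Pv \<and> cell_direct G Mv Pv \<and> \<not> z3_direct G Mv"
    have a: "aut ?S (ext Mv)" using h aut_ext by blast
    have b: "\<forall>x. ext Mv *v emb x = emb (Mv *v x)" by (simp add: ext_emb)
    have c: "\<not> z3_direct ?S (ext Mv)" using h z3_ext by blast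
    have d: "\<exists>P. cell ?S P \<and> preserves (ext Mv) P \<and> cell_direct ?S (ext Mv) P"
      using second[OF symS LS] h by blast
    show "\<exists>M. aut ?S M \<and> (\<forall>x. M *v emb x = emb (Mv *v x)) \<and> \<not> z3_direct ?S M \<and>
          (\<exists>P. cell ?S P \<and> preserves M P \<and> cell_direct ?S M P)"
      using a b c d by blast
  qed
  have C1: "achiral G \<longrightarrow> achiral ?S"
  proof
    assume "achiral G"
    then obtain P M where P: "cell G P" and M: "aut G M" "preserves M P" "z3_direct G M" "\<not> cell_direct G M P"
      unfolding achiral_def by blast
    obtain Q0 where Q0: "cell_lift G P Q0" using P unfolding cell_def by blast
    obtain K0 where K0: "K0 \<in> components (UU G)" "Q0 = closure K0 \<inter> negcone G" and PQ: "P = Q0 \<union> uminus ` Q0"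
      using Q0 unfolding cell_lift_def half_cell_def UU_def by blast
    obtain k0 where k0: "k0 \<in> K0" using in_components_nonempty[OF K0(1)] by blast
    have opG: "open (UU G)" by (rule open_UU[OF symG LG])
    let ?K = "(\<lambda>x. M *v x) ` K0"
    have Kc: "?K \<in> components (UU G)" by (rule aut_comp(2)[OF M(1) K0(1) k0])
    have mK: "M *v k0 \<in> ?K" using k0 by blast
    have k0Q: "k0 \<in> Q0" using k0 K0 in_components_subset[OF K0(1)] closure_subset UU_sub by blast
    have "M *v k0 \<in> P" using M(2) k0Q PQ unfolding preserves_def by blast
    hence "M *v k0 \<in> closure K0 \<or> M *v k0 \<in> closure (uminus ` K0)"
      using PQ K0(2) neg_Q[of K0 G] by blast
    moreover have nK0: "uminus ` K0 \<in> components (UU G)" by (rule neg_comp(2)[OF K0(1) k0])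
    ultimately have "?K = K0 \<or> ?K = uminus ` K0"
      using GL[OF opG K0(1) Kc mK] GL[OF opG nK0 Kc mK] by blast
    moreover have "?K \<noteq> K0"
    proof
      assume "?K = K0"
      hence "(\<lambda>x. M *v x) ` Q0 = Q0" using K0(2) aut_Q[OF M(1), of K0] by simp
      hence "cell_direct G M P" unfolding cell_direct_def using Q0 by blast
      thus False using M(4) by simp
    qed
    ultimately have "?K = uminus ` K0" by blast
    hence MQ0: "(\<lambda>x. M *v x) ` Q0 = uminus ` Q0" using K0(2) aut_Q[OF M(1), of K0] neg_Q[of K0 G] by simp
    have nMQ: "(\<lambda>x. (- M) *v x) ` Q0 = Q0" by (simp add: negM_image MQ0 neg_neg_image)
    have autN: "aut G (- M)" by (rule aut_neg[OF M(1)])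
    have presN: "preserves (- M) P"
    proof -
      have "(\<lambda>x. (- M) *v x) ` P = uminus ` ((\<lambda>x. M *v x) ` P)" by (rule negM_image)
      also have "\<dots> = uminus ` P" using M(2) unfolding preserves_def by simp
      also have "\<dots> = P" unfolding PQ by (simp add: image_Un neg_neg_image Un_commute)
      finally show ?thesis unfolding preserves_def .
    qed
    have dirN: "cell_direct G (- M) P" unfolding cell_direct_def using Q0 nMQ by blast
    obtain x0 where x0: "x0 \<in> disc3 G" "2 *\<^sub>R x0 \<notin> latt" using exists_bad_G[OF card] by blast
    have nzN: "\<not> z3_direct G (- M)" by (rule neg_not_z3[OF M(3) x0])
    have "\<exists>M'. aut ?S M' \<and> (\<forall>x. M' *v emb x = emb ((- M) *v x)) \<and> \<not> z3_direct ?S M' \<and>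
          (\<exists>P'. cell ?S P' \<and> preserves M' P' \<and> cell_direct ?S M' P')"
      using C2[rule_format, of P "- M"] P autN presN dirN nzN by blast
    then obtain M' P' where M': "aut ?S M'" "\<not> z3_direct ?S M'" "cell ?S P'" "preserves M' P'" "cell_direct ?S M' P'"
      by blast
    have z3N': "z3_direct ?S (- M')" by (rule z3_neg[OF card M'(1,2)])
    have autN': "aut ?S (- M')" by (rule aut_neg[OF M'(1)])
    obtain Q1 where Q1: "cell_lift ?S P' Q1" "(\<lambda>x. M' *v x) ` Q1 = Q1" using M'(5) unfolding cell_direct_def by blast
    obtain K1 where K1: "K1 \<in> components (UU ?S)" "Q1 = closure K1 \<inter> negcone ?S" and PQ1: "P' = Q1 \<union> uminus ` Q1"
      using Q1(1) unfolding cell_lift_def half_cell_def UU_def by blast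
    have presN': "preserves (- M') P'"
    proof -
      have "(\<lambda>x. (- M') *v x) ` P' = uminus ` ((\<lambda>x. M' *v x) ` P')" by (rule negM_image)
      also have "\<dots> = uminus ` P'" using M'(4) unfolding preserves_def by simp
      also have "\<dots> = P'" unfolding PQ1 by (simp add: image_Un neg_neg_image Un_commute)
      finally show ?thesis unfolding preserves_def .
    qed
    have ns: "uminus ` Q1 \<noteq> Q1" using Q_not_sym[OF symS LS K1(1)] K1(2) by simp
    have n1: "(\<lambda>x. (- M') *v x) ` Q1 = uminus ` Q1" by (simp add: negM_image Q1(2))
    have n2: "(\<lambda>x. (- M') *v x) ` (uminus ` Q1) = Q1" by (simp add: negM_image M_neg_image Q1(2) neg_neg_image)
    have ndirN': "\<not> cell_direct ?S (- M') P'"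
    proof
      assume "cell_direct ?S (- M') P'"
      then obtain Q2 where Q2: "cell_lift ?S P' Q2" "(\<lambda>x. (- M') *v x) ` Q2 = Q2" unfolding cell_direct_def by blast
      obtain K2 where K2: "K2 \<in> components (UU ?S)" "Q2 = closure K2 \<inter> negcone ?S" and PQ2: "P' = Q2 \<union> uminus ` Q2"
        using Q2(1) unfolding cell_lift_def half_cell_def UU_def by blast
      have "closure K2 \<inter> negcone ?S \<subseteq> (closure K1 \<inter> negcone ?S) \<union> uminus ` (closure K1 \<inter> negcone ?S)"
        using PQ1 PQ2 K1(2) K2(2) by blast
      hence "K2 = K1 \<or> K2 = uminus ` K1" by (rule lift_unique[OF symS LS K1(1) K2(1)])
      hence "Q2 = Q1 \<or> Q2 = uminus ` Q1" using K1(2) K2(2) neg_Q[of K1 ?S] by auto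
      thus False
      proof
        assume "Q2 = Q1" thus False using Q2(2) n1 ns by simp
      next
        assume "Q2 = uminus ` Q1" thus False using Q2(2) n2 ns by simp
      qed
    qed
    show "achiral ?S" unfolding achiral_def using M'(3) autN' presN' z3N' ndirN' by blast
  qed
  show ?thesis using C1 C2 by blast
qed

end
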